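(* Let $G$ be a finite group with $Z(G)=1$, $H\subseteq G$ an abelian subgroup, $\omega$ a non-degenerate 2-cocycle on $\widehat H$, and $A=(kG)^J$ with $J=\sum_{\alpha,\beta\in\widehat H}\omega(\alpha,\beta)e_\alpha\otimes e_\beta$. Then $|H|$ divides $[A^*:G(A^* )\cap Z(A^* )]=\dim A/|G(A^* )\cap Z(A^* )|$.
   Context: $k$ is an algebraically closed field of characteristic zero. For a twist $J$ in a Hopf algebra $A$, $A^J$ is the Hopf algebra with the same algebra and counit, comultiplication $\Delta^J(h)=J^{-1}\Delta(h)J$ and antipode $S^J(h)=v^{-1}S(h)v$, $v=m(S\otimes\mathrm{id})(J)$. For an abelian subgroup $H$ of $G$, $\widehat H$ is its character group, $e_\chi=\frac{1}{|H|}\sum_{h\in H}\chi(h^{-1})h$ for $\chi\in\widehat H$, and for a 2-cocycle $\omega$ on $\widehat H$ the element $J=\sum\omega(\alpha,\beta)e_\alpha\otimes e_\beta$ is a twist in $kG$. $\chi\in\widehat H$ is $\omega$-regular if $\omega(\chi,\psi)=\omega(\psi,\chi)$ for all $\psi\in\widehat H$; $\omega$ is non-degenerate if only the trivial character is $\omega$-regular. $G(A^* )=\widehat G$ is the group of group-likes of $A^*$ and $Z(A^* )$ its center. *)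

theory Defs
  imports "HOL-Algebra.Group" "HOL-Computational_Algebra.Polynomial"
begin

text \<open>k algebraically closed (of characteristic zero via the type class field_char_0).\<close>
definition alg_closed :: "'k::field itself \<Rightarrow> bool" where
  "alg_closed _ \<longleftrightarrow> (\<forall>p :: 'k poly. degree p \<ge> 1 \<longrightarrow> (\<exists>x. poly p x = 0))"

definition grp_center :: "('a, 'b) monoid_scheme \<Rightarrow> 'a set" where
  "grp_center G = {z \<in> carrier G. \<forall>g \<in> carrier G. z \<otimes>\<^bsub>G\<^esub> g = g \<otimes>\<^bsub>G\<^esub> z}"

text \<open>Character group of an abelian subgroup H: homomorphisms H \<rightarrow> k^*,
  represented as functions vanishing outside H.\<close>
definition chars :: "('a, 'b) monoid_scheme \<Rightarrow> 'a set \<Rightarrow> ('a \<Rightarrow> 'k::field) set" where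
  "chars G H = {\<chi>. (\<forall>x\<in>H. \<forall>y\<in>H. \<chi> (x \<otimes>\<^bsub>G\<^esub> y) = \<chi> x * \<chi> y)
                  \<and> \<chi> \<one>\<^bsub>G\<^esub> = 1 \<and> (\<forall>x. x \<notin> H \<longrightarrow> \<chi> x = 0)}"

definition char_mult :: "'a set \<Rightarrow> ('a \<Rightarrow> 'k::field) \<Rightarrow> ('a \<Rightarrow> 'k) \<Rightarrow> ('a \<Rightarrow> 'k)" where
  "char_mult H \<alpha> \<beta> = (\<lambda>x. if x \<in> H then \<alpha> x * \<beta> x else 0)"

definition char_one :: "'a set \<Rightarrow> ('a \<Rightarrow> 'k::field)" where
  "char_one H = (\<lambda>x. if x \<in> H then 1 else 0)"

definition is_2cocycle :: "('a, 'b) monoid_scheme \<Rightarrow> 'a set \<Rightarrow> (('a \<Rightarrow> 'k::field) \<Rightarrow> ('a \<Rightarrow> 'k) \<Rightarrow> 'k) \<Rightarrow> bool" where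
  "is_2cocycle G H \<omega> \<longleftrightarrow>
     (\<forall>\<alpha>\<in>chars G H. \<forall>\<beta>\<in>chars G H. \<omega> \<alpha> \<beta> \<noteq> 0) \<and>
     (\<forall>\<alpha>\<in>chars G H. \<forall>\<beta>\<in>chars G H. \<forall>\<gamma>\<in>chars G H.
        \<omega> \<alpha> \<beta> * \<omega> (char_mult H \<alpha> \<beta>) \<gamma> = \<omega> \<beta> \<gamma> * \<omega> \<alpha> (char_mult H \<beta> \<gamma>))"

definition omega_regular :: "('a, 'b) monoid_scheme \<Rightarrow> 'a set \<Rightarrow> (('a \<Rightarrow> 'k::field) \<Rightarrow> ('a \<Rightarrow> 'k) \<Rightarrow> 'k) \<Rightarrow> ('a \<Rightarrow> 'k) \<Rightarrow> bool" where
  "omega_regular G H \<omega> \<chi> \<longleftrightarrow> (\<forall>\<psi>\<in>chars G H. \<omega> \<chi> \<psi> = \<omega> \<psi> \<chi>)"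

definition nondegenerate :: "('a, 'b) monoid_scheme \<Rightarrow> 'a set \<Rightarrow> (('a \<Rightarrow> 'k::field) \<Rightarrow> ('a \<Rightarrow> 'k) \<Rightarrow> 'k) \<Rightarrow> bool" where
  "nondegenerate G H \<omega> \<longleftrightarrow> (\<forall>\<chi>\<in>chars G H. omega_regular G H \<omega> \<chi> \<longrightarrow> \<chi> = char_one H)"

text \<open>Elements of kG are coefficient functions on carrier G; elements of kG \<otimes> kG = k[G\<times>G]
  are coefficient functions on carrier G \<times> carrier G.\<close>

definition idem :: "('a, 'b) monoid_scheme \<Rightarrow> 'a set \<Rightarrow> ('a \<Rightarrow> 'k::field) \<Rightarrow> ('a \<Rightarrow> 'k)" where
  "idem G H \<chi> = (\<lambda>x. if x \<in> H then \<chi> (inv\<^bsub>G\<^esub> x) / of_nat (card H) else 0)"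

definition twist_J :: "('a, 'b) monoid_scheme \<Rightarrow> 'a set \<Rightarrow> (('a \<Rightarrow> 'k::field) \<Rightarrow> ('a \<Rightarrow> 'k) \<Rightarrow> 'k) \<Rightarrow> ('a \<times> 'a \<Rightarrow> 'k)" where
  "twist_J G H \<omega> = (\<lambda>(x, y). \<Sum>\<alpha>\<in>chars G H. \<Sum>\<beta>\<in>chars G H. \<omega> \<alpha> \<beta> * idem G H \<alpha> x * idem G H \<beta> y)"

definition tmult :: "('a, 'b) monoid_scheme \<Rightarrow> ('a \<times> 'a \<Rightarrow> 'k::field) \<Rightarrow> ('a \<times> 'a \<Rightarrow> 'k) \<Rightarrow> ('a \<times> 'a \<Rightarrow> 'k)" where
  "tmult G F F' = (\<lambda>(x, y). if x \<in> carrier G \<and> y \<in> carrier G then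
      (\<Sum>(a, b)\<in>carrier G \<times> carrier G. F (a, b) * F' (inv\<^bsub>G\<^esub> a \<otimes>\<^bsub>G\<^esub> x, inv\<^bsub>G\<^esub> b \<otimes>\<^bsub>G\<^esub> y))
    else 0)"

definition tunit :: "('a, 'b) monoid_scheme \<Rightarrow> ('a \<times> 'a \<Rightarrow> 'k::field)" where
  "tunit G = (\<lambda>p. if p = (\<one>\<^bsub>G\<^esub>, \<one>\<^bsub>G\<^esub>) then 1 else 0)"

definition tsupp :: "('a, 'b) monoid_scheme \<Rightarrow> ('a \<times> 'a \<Rightarrow> 'k::field) \<Rightarrow> bool" where
  "tsupp G F \<longleftrightarrow> (\<forall>p. p \<notin> carrier G \<times> carrier G \<longrightarrow> F p = 0)"

definition twist_Jinv :: "('a, 'b) monoid_scheme \<Rightarrow> 'a set \<Rightarrow> (('a \<Rightarrow> 'k::field) \<Rightarrow> ('a \<Rightarrow> 'k) \<Rightarrow> 'k) \<Rightarrow> ('a \<times> 'a \<Rightarrow> 'k)" where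
  "twist_Jinv G H \<omega> = (THE X. tsupp G X \<and> tmult G (twist_J G H \<omega>) X = tunit G
                                 \<and> tmult G X (twist_J G H \<omega>) = tunit G)"

text \<open>Twisted comultiplication on a basis element h \<in> G: J^{-1} (h \<otimes> h) J.\<close>
definition DeltaJ :: "('a, 'b) monoid_scheme \<Rightarrow> 'a set \<Rightarrow> (('a \<Rightarrow> 'k::field) \<Rightarrow> ('a \<Rightarrow> 'k) \<Rightarrow> 'k) \<Rightarrow> 'a \<Rightarrow> ('a \<times> 'a \<Rightarrow> 'k)" where
  "DeltaJ G H \<omega> h = tmult G (tmult G (twist_Jinv G H \<omega>) (\<lambda>p. if p = (h, h) then 1 else 0)) (twist_J G H \<omega>)"

text \<open>The dual A* of A = (kG)^J: linear functionals, determined by their values on G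
  (represented as functions vanishing outside carrier G). Product dual to \<Delta>^J.\<close>
definition dual_mult :: "('a, 'b) monoid_scheme \<Rightarrow> 'a set \<Rightarrow> (('a \<Rightarrow> 'k::field) \<Rightarrow> ('a \<Rightarrow> 'k) \<Rightarrow> 'k) \<Rightarrow> ('a \<Rightarrow> 'k) \<Rightarrow> ('a \<Rightarrow> 'k) \<Rightarrow> ('a \<Rightarrow> 'k)" where
  "dual_mult G H \<omega> \<phi> \<psi> = (\<lambda>h. if h \<in> carrier G then
      (\<Sum>(x, y)\<in>carrier G \<times> carrier G. DeltaJ G H \<omega> h (x, y) * \<phi> x * \<psi> y) else 0)"

definition dual_space :: "('a, 'b) monoid_scheme \<Rightarrow> ('a \<Rightarrow> 'k::field) set" where
  "dual_space G = {\<phi>. \<forall>x. x \<notin> carrier G \<longrightarrow> \<phi> x = 0}"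

text \<open>Group-like elements of A*: \<Delta>(\<phi>) = \<phi> \<otimes> \<phi> (dual to the multiplication of kG) and \<epsilon>(\<phi>) = \<phi>(1) = 1.\<close>
definition dual_grouplikes :: "('a, 'b) monoid_scheme \<Rightarrow> ('a \<Rightarrow> 'k::field) set" where
  "dual_grouplikes G = {\<phi> \<in> dual_space G.
      (\<forall>x\<in>carrier G. \<forall>y\<in>carrier G. \<phi> (x \<otimes>\<^bsub>G\<^esub> y) = \<phi> x * \<phi> y) \<and> \<phi> \<one>\<^bsub>G\<^esub> = 1}"

definition dual_center :: "('a, 'b) monoid_scheme \<Rightarrow> 'a set \<Rightarrow> (('a \<Rightarrow> 'k::field) \<Rightarrow> ('a \<Rightarrow> 'k) \<Rightarrow> 'k) \<Rightarrow> ('a \<Rightarrow> 'k) set" where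
  "dual_center G H \<omega> = {\<phi> \<in> dual_space G.
      \<forall>\<psi>\<in>dual_space G. dual_mult G H \<omega> \<phi> \<psi> = dual_mult G H \<omega> \<psi> \<phi>}"

end

theory Submission
  imports Defs "HOL-Algebra.Multiplicative_Group" "HOL-Library.FuncSet"
begin


definition chs :: "('a,'b) monoid_scheme \<Rightarrow> ('a \<Rightarrow> 'k::field) set" where
 "chs M = {\<chi>. (\<forall>x\<in>carrier M. \<forall>y\<in>carrier M. \<chi> (x \<otimes>\<^bsub>M\<^esub> y) = \<chi> x * \<chi> y)
     \<and> \<chi> \<one>\<^bsub>M\<^esub> = 1 \<and> (\<forall>x. x \<notin> carrier M \<longrightarrow> \<chi> x = 0)}"

definition one_ch :: "('a,'b) monoid_scheme \<Rightarrow> ('a \<Rightarrow> 'k::field)" where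
  "one_ch M = (\<lambda>x. if x \<in> carrier M then 1 else 0)"

lemma chars_chs: "chars G H = chs (G\<lparr>carrier := H\<rparr>)"
  unfolding chars_def chs_def by simp

lemma chsD:
  assumes "\<chi> \<in> chs M"
  shows "x \<in> carrier M \<Longrightarrow> y \<in> carrier M \<Longrightarrow> \<chi> (x \<otimes>\<^bsub>M\<^esub> y) = \<chi> x * \<chi> y"
    and "\<chi> \<one>\<^bsub>M\<^esub> = 1" and "x \<notin> carrier M \<Longrightarrow> \<chi> x = 0"
  using assms unfolding chs_def by auto

lemma finite_roots_unity_field:
  assumes "(n::nat) \<ge> 1"
  shows "finite {z::'k::field. z ^ n = 1}"
proof -
  define p :: "'k poly" where "p = Polynomial.monom 1 n - 1"
  have "Polynomial.coeff p n = 1" using assms unfolding p_def by (simp add: coeff_monom)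
  then have "p \<noteq> 0" by auto
  moreover have "poly p z = z ^ n - 1" for z unfolding p_def by (simp add: poly_monom)
  ultimately show ?thesis using poly_roots_finite[of p] by simp
qed

context group begin

lemma chs_inv:
  assumes "\<chi> \<in> chs G" "x \<in> carrier G"
  shows "\<chi> (inv x) * \<chi> x = 1"
proof -
  have "\<chi> (inv x \<otimes> x) = \<chi> (inv x) * \<chi> x" using chsD(1)[OF assms(1) inv_closed[OF assms(2)] assms(2)] .
  moreover have "inv x \<otimes> x = \<one>" using assms(2) by simp
  ultimately show ?thesis using chsD(2)[OF assms(1)] by simp
qed

lemma chs_nz:
  assumes "\<chi> \<in> chs G" "x \<in> carrier G"
  shows "\<chi> x \<noteq> 0"
  using chs_inv[OF assms] by auto

lemma chs_inv': 
  assumes "\<chi> \<in> chs G" "x \<in> carrier G"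
  shows "\<chi> (inv x) = inverse (\<chi> x)"
  using chs_inv[OF assms] by (simp add: field_simps chs_nz[OF assms])

lemma chs_pow:
  assumes "\<chi> \<in> chs G" "x \<in> carrier G"
  shows "\<chi> (x [^] (n::nat)) = \<chi> x ^ n"
  by (induction n) (auto simp: chsD[OF assms(1)] assms(2))

lemma chs_int_pow:
  assumes "\<chi> \<in> chs G" "x \<in> carrier G"
  shows "\<chi> (x [^] (i::int)) = \<chi> x powi i"
proof (cases "i \<ge> 0")
  case True
  then obtain n where "i = int n" by (metis nonneg_eq_int)
  then show ?thesis using chs_pow[OF assms] by (simp add: int_pow_int)
next
  case False
  define n where "n = nat (- i)"
  have n: "i = - int n" using False n_def by simp
  have "\<chi> (x [^] i) = \<chi> (inv (x [^] n))" using n assms(2) by (simp add: int_pow_neg int_pow_int)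
  also have "\<dots> = inverse (\<chi> x ^ n)" using chs_inv'[OF assms(1)] chs_pow[OF assms] assms(2) by simp
  finally show ?thesis using n by (simp add: power_int_minus)
qed

lemma one_ch_chs: "one_ch G \<in> chs G"
  unfolding chs_def one_ch_def by auto

lemma finite_chs:
  assumes fin: "finite (carrier G)"
  shows "finite (chs G :: ('a \<Rightarrow> 'k::field) set)"
proof -
  define R :: "'k set" where "R = {z. z ^ order G = 1}"
  have ord_pos: "order G \<ge> 1" using fin unfolding order_def
    by (metis card_0_eq empty_iff less_one not_less one_closed)
  have finR: "finite R" unfolding R_def using finite_roots_unity_field[OF ord_pos] .
  have "(\<lambda>f. restrict f (carrier G)) ` chs G \<subseteq> (\<Pi>\<^sub>E x\<in>carrier G. R)"
  proof
    fix g assume "g \<in> (\<lambda>f. restrict f (carrier G)) ` (chs G :: ('a \<Rightarrow> 'k) set)"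
    then obtain f :: "'a \<Rightarrow> 'k" where f: "f \<in> chs G" "g = restrict f (carrier G)" by auto
    have "f x ^ order G = 1" if "x \<in> carrier G" for x
      using chs_pow[OF f(1) that, of "order G"] pow_order_eq_1[OF that] chsD(2)[OF f(1)] by simp
    then show "g \<in> (\<Pi>\<^sub>E x\<in>carrier G. R)" using f(2) R_def by auto
  qed
  moreover have "inj_on (\<lambda>f. restrict f (carrier G)) (chs G :: ('a \<Rightarrow> 'k) set)"
  proof (rule inj_onI)
    fix f g :: "'a \<Rightarrow> 'k" assume "f \<in> chs G" "g \<in> chs G" "restrict f (carrier G) = restrict g (carrier G)"
    then show "f = g" using chsD(3) by (metis restrict_apply' ext)
  qed
  ultimately show ?thesis
    using finite_PiE[OF fin, of "\<lambda>_. R"] finR by (metis finite_imageD finite_subset)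
qed


lemma chs_sum_shift:
  assumes "\<chi> \<in> chs G" "g \<in> carrier G"
  shows "(\<Sum>x\<in>carrier G. \<chi> x) = \<chi> g * (\<Sum>x\<in>carrier G. \<chi> x)"
proof -
  have "(\<Sum>x\<in>carrier G. \<chi> x) = (\<Sum>x\<in>(\<lambda>x. g \<otimes> x) ` carrier G. \<chi> x)"
    using surj_const_mult[OF assms(2)] by simp
  also have "\<dots> = (\<Sum>x\<in>carrier G. \<chi> (g \<otimes> x))"
    using sum.reindex[OF inj_on_cmult[OF assms(2)]] by simp
  also have "\<dots> = \<chi> g * (\<Sum>x\<in>carrier G. \<chi> x)"
    by (simp add: sum_distrib_left chsD(1)[OF assms(1) assms(2)])
  finally show ?thesis .
qed

lemma chs_eq_one_ch:
  assumes "\<chi> \<in> chs G" "\<forall>g\<in>carrier G. \<chi> g = 1"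
  shows "\<chi> = one_ch G"
  using assms chsD(3)[OF assms(1)] unfolding one_ch_def by (intro ext) auto

lemma chs_sum:
  assumes "\<chi> \<in> chs G"
  shows "(\<Sum>x\<in>carrier G. \<chi> x) = (if \<chi> = one_ch G then of_nat (order G) else 0)"
proof (cases "\<chi> = one_ch G")
  case True then show ?thesis by (simp add: one_ch_def order_def)
next
  case False
  then obtain g where g: "g \<in> carrier G" "\<chi> g \<noteq> 1"
    using chs_eq_one_ch[OF assms] by (meson)
  have "(\<Sum>x\<in>carrier G. \<chi> x) = \<chi> g * (\<Sum>x\<in>carrier G. \<chi> x)" using chs_sum_shift[OF assms g(1)] .
  then have "(1 - \<chi> g) * (\<Sum>x\<in>carrier G. \<chi> x) = 0" by (simp add: algebra_simps)
  then show ?thesis using g(2) False by simp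
qed

end

definition ch_grp :: "('a,'b) monoid_scheme \<Rightarrow> ('a \<Rightarrow> 'k::field) set \<Rightarrow> bool" where
  "ch_grp M T \<longleftrightarrow> T \<subseteq> chs M \<and> finite T \<and> one_ch M \<in> T \<and> (\<forall>\<chi>\<in>T. \<forall>\<psi>\<in>T. (\<lambda>x. \<chi> x * \<psi> x) \<in> T)"

context group begin

lemma T_sum_shift:
  assumes T: "ch_grp G T" and psi: "\<psi> \<in> T" and x: "x \<in> carrier G"
  shows "(\<Sum>\<chi>\<in>T. \<chi> x) = \<psi> x * (\<Sum>\<chi>\<in>T. \<chi> x)"
proof -
  let ?f = "\<lambda>\<chi>. (\<lambda>y. \<psi> y * \<chi> y)"
  have Tc: "T \<subseteq> chs G" "finite T" "\<forall>\<chi>\<in>T. \<forall>\<psi>\<in>T. (\<lambda>x. \<chi> x * \<psi> x) \<in> T"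
    using T unfolding ch_grp_def by auto
  have psic: "\<psi> \<in> chs G" using Tc psi by auto
  have inj: "inj_on ?f T"
  proof (rule inj_onI)
    fix \<chi> \<chi>' assume a: "\<chi> \<in> T" "\<chi>' \<in> T" "?f \<chi> = ?f \<chi>'"
    show "\<chi> = \<chi>'"
    proof
      fix y show "\<chi> y = \<chi>' y"
      proof (cases "y \<in> carrier G")
        case True
        have "\<psi> y * \<chi> y = \<psi> y * \<chi>' y" using fun_cong[OF a(3), of y] by simp
        then show ?thesis using chs_nz[OF psic True] by simp
      next
        case False
        have "\<chi> \<in> chs G" "\<chi>' \<in> chs G" using a(1,2) Tc(1) by auto
        then show ?thesis using chsD(3)[of \<chi> G y] chsD(3)[of \<chi>' G y] False by simp
      qed
    qed
  qed
  have "?f ` T \<subseteq> T" using Tc(3) psi by auto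
  then have img: "?f ` T = T" using endo_inj_surj[OF Tc(2) _ inj] by simp
  have "(\<Sum>\<chi>\<in>T. \<chi> x) = (\<Sum>\<chi>\<in>?f ` T. \<chi> x)" using img by simp
  also have "\<dots> = (\<Sum>\<chi>\<in>T. \<psi> x * \<chi> x)" using sum.reindex[OF inj] by simp
  also have "\<dots> = \<psi> x * (\<Sum>\<chi>\<in>T. \<chi> x)" by (simp add: sum_distrib_left)
  finally show ?thesis .
qed

lemma T_sum:
  assumes T: "ch_grp G T" and x: "x \<in> carrier G"
  shows "(\<Sum>\<chi>\<in>T. \<chi> x) = (if (\<forall>\<chi>\<in>T. \<chi> x = 1) then of_nat (card T) else 0)"
proof (cases "\<forall>\<chi>\<in>T. \<chi> x = 1")
  case True then show ?thesis by (simp add: sum.cong[of T T _ "\<lambda>_. 1"])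
next
  case False
  then obtain \<psi> where p: "\<psi> \<in> T" "\<psi> x \<noteq> 1" by blast
  have "(1 - \<psi> x) * (\<Sum>\<chi>\<in>T. \<chi> x) = 0" using T_sum_shift[OF T p(1) x] by (simp add: algebra_simps)
  then have "(\<Sum>\<chi>\<in>T. \<chi> x) = 0" using p by simp
  then show ?thesis using False by auto
qed

lemma T_count:
  assumes fin: "finite (carrier G)" and T: "ch_grp G (T :: ('a \<Rightarrow> 'k::field_char_0) set)"
  shows "card T * card {x\<in>carrier G. \<forall>\<chi>\<in>T. \<chi> x = 1} = order G"
proof -
  let ?K = "{x\<in>carrier G. \<forall>\<chi>\<in>T. \<chi> x = 1}"
  have Tc: "T \<subseteq> chs G" "finite T" "one_ch G \<in> T" using T unfolding ch_grp_def by auto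
  have "(\<Sum>x\<in>carrier G. \<Sum>\<chi>\<in>T. \<chi> x) = (\<Sum>x\<in>carrier G. if x \<in> ?K then (of_nat (card T) :: 'k) else 0)"
    using T_sum[OF T] by (intro sum.cong) auto
  also have "\<dots> = (\<Sum>x\<in>?K. (of_nat (card T) :: 'k))"
    using sum.inter_filter[OF fin, of "\<lambda>_. (of_nat (card T) :: 'k)" "\<lambda>x. x \<in> ?K"] by simp
  also have "\<dots> = of_nat (card T * card ?K)" by simp
  finally have 1: "(\<Sum>x\<in>carrier G. \<Sum>\<chi>\<in>T. \<chi> x) = (of_nat (card T * card ?K) :: 'k)" .
  have "(\<Sum>x\<in>carrier G. \<Sum>\<chi>\<in>T. \<chi> x) = (\<Sum>\<chi>\<in>T. \<Sum>x\<in>carrier G. \<chi> x)" by (rule sum.swap)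
  also have "\<dots> = (\<Sum>\<chi>\<in>T. if \<chi> = one_ch G then (of_nat (order G) :: 'k) else 0)"
    by (intro sum.cong refl, rule chs_sum) (use Tc(1) in auto)
  also have "\<dots> = of_nat (order G)" using sum.delta[OF Tc(2), of "one_ch G" "\<lambda>_. (of_nat (order G) :: 'k)"] Tc(3) by simp
  finally have "(of_nat (card T * card ?K) :: 'k) = of_nat (order G)" using 1 by simp
  then show ?thesis by (simp only: of_nat_eq_iff)
qed

end


lemma alg_closed_root:
  assumes "alg_closed TYPE('k::field)" "(m::nat) \<ge> 1"
  shows "\<exists>t::'k. t ^ m = c"
proof -
  define p :: "'k poly" where "p = Polynomial.monom 1 m - [:c:]"
  have "Polynomial.coeff p m = 1" using assms(2) unfolding p_def by (cases m) (auto simp: coeff_monom)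
  then have "m \<le> degree p" by (intro le_degree) simp
  then have "degree p \<ge> 1" using assms(2) by simp
  then obtain x where "poly p x = 0" using assms(1) unfolding alg_closed_def by blast
  then show ?thesis unfolding p_def by (auto simp: poly_monom)
qed

lemma alg_closed_root_unity:
  assumes "alg_closed TYPE('k::field_char_0)" "(m::nat) \<ge> 2"
  shows "\<exists>t::'k. t ^ m = 1 \<and> t \<noteq> 1"
proof -
  define p :: "'k poly" where "p = (\<Sum>i<m. Polynomial.monom 1 i)"
  have "Polynomial.coeff p (m - 1) = (\<Sum>i<m. if i = m - 1 then 1 else 0)"
    unfolding p_def coeff_sum by (simp add: coeff_monom)
  also have "\<dots> = 1" using assms(2) by simp
  finally have "m - 1 \<le> degree p" by (intro le_degree) simp
  then have "degree p \<ge> 1" using assms(2) by simp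
  then obtain x where x: "poly p x = 0" using assms(1) unfolding alg_closed_def by blast
  have px: "poly p x = (\<Sum>i<m. x ^ i)" unfolding p_def by (simp add: poly_sum poly_monom)
  have "x ^ m - 1 = (x - 1) * (\<Sum>i<m. x ^ i)" by (rule power_diff_1_eq)
  then have "x ^ m = 1" using x px by simp
  moreover have "x \<noteq> 1"
  proof
    assume "x = 1"
    then have "poly p x = of_nat m" using px by simp
    then show False using x assms(2) by simp
  qed
  ultimately show ?thesis by blast
qed

lemma chs_cong_carrier: "chs (G\<lparr>carrier := carrier G\<rparr>) = chs G"
  unfolding chs_def by simp

context group begin

lemma sub_int_pow_closed:
  assumes "subgroup L G" "x \<in> L"
  shows "x [^] (i::int) \<in> L"
proof -
  interpret L: group "G\<lparr>carrier := L\<rparr>" using subgroup_imp_group[OF assms(1)] .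
  have "x [^]\<^bsub>G\<lparr>carrier := L\<rparr>\<^esub> i \<in> L" using L.int_pow_closed assms(2) by simp
  then show ?thesis using int_pow_consistent[OF assms] by simp
qed

lemma sub_chs:
  assumes L: "subgroup L G" and b: "\<beta> \<in> chs (G\<lparr>carrier := L\<rparr>)"
  shows "x \<in> L \<Longrightarrow> y \<in> L \<Longrightarrow> \<beta> (x \<otimes> y) = \<beta> x * \<beta> y"
    and "\<beta> \<one> = 1" and "x \<notin> L \<Longrightarrow> \<beta> x = 0"
    and "x \<in> L \<Longrightarrow> \<beta> x \<noteq> 0"
    and "x \<in> L \<Longrightarrow> \<beta> (x [^] (i::int)) = \<beta> x powi i"
    and "x \<in> L \<Longrightarrow> \<beta> (x [^] (n::nat)) = \<beta> x ^ n"
proof -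
  interpret L: group "G\<lparr>carrier := L\<rparr>" using subgroup_imp_group[OF L] .
  show "x \<in> L \<Longrightarrow> y \<in> L \<Longrightarrow> \<beta> (x \<otimes> y) = \<beta> x * \<beta> y" using chsD(1)[OF b] by simp
  show "\<beta> \<one> = 1" using chsD(2)[OF b] by simp
  show "x \<notin> L \<Longrightarrow> \<beta> x = 0" using chsD(3)[OF b] by simp
  show "x \<in> L \<Longrightarrow> \<beta> x \<noteq> 0" using L.chs_nz[OF b] by simp
  show "x \<in> L \<Longrightarrow> \<beta> (x [^] (i::int)) = \<beta> x powi i"
    using L.chs_int_pow[OF b, of x i] int_pow_consistent[OF L, of x i] by simp
  show "x \<in> L \<Longrightarrow> \<beta> (x [^] (n::nat)) = \<beta> x ^ n"
    using L.chs_pow[OF b, of x n] nat_pow_consistent[of x n L] by simp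
qed

end

context comm_group begin

definition adjoin :: "'a set \<Rightarrow> 'a \<Rightarrow> 'a set" where
  "adjoin L h = {l \<otimes> h [^] (i::int) | l i. l \<in> L}"

lemma adjoin_subgroup:
  assumes L: "subgroup L G" and h: "h \<in> carrier G"
  shows "subgroup (adjoin L h) G"
proof (rule subgroupI)
  have Lc: "L \<subseteq> carrier G" using L subgroup.subset by blast
  show "adjoin L h \<subseteq> carrier G" unfolding adjoin_def using Lc h by auto
  show "adjoin L h \<noteq> {}" unfolding adjoin_def using subgroup.one_closed[OF L] by blast
  fix a b assume a: "a \<in> adjoin L h"
  then obtain l i where li: "l \<in> L" "a = l \<otimes> h [^] (i::int)" unfolding adjoin_def by blast
  have "inv a = inv l \<otimes> h [^] (- i)"
    using li Lc h by (simp add: inv_mult int_pow_neg subsetD)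
  then show "inv a \<in> adjoin L h" unfolding adjoin_def using li(1) subgroup.m_inv_closed[OF L] by blast
  assume "b \<in> adjoin L h"
  then obtain l' j where lj: "l' \<in> L" "b = l' \<otimes> h [^] (j::int)" unfolding adjoin_def by blast
  have "a \<otimes> b = (l \<otimes> l') \<otimes> h [^] (i + j)"
    using li lj Lc h by (simp add: int_pow_mult m_ac subsetD)
  then show "a \<otimes> b \<in> adjoin L h" unfolding adjoin_def using li(1) lj(1) subgroup.m_closed[OF L] by blast
qed

lemma adjoin_sup: "subgroup L G \<Longrightarrow> h \<in> carrier G \<Longrightarrow> L \<subseteq> adjoin L h"
proof
  fix l assume "subgroup L G" "h \<in> carrier G" "l \<in> L"
  then have "l = l \<otimes> h [^] (0::int)" using subgroup.subset by fastforce
  then show "l \<in> adjoin L h" unfolding adjoin_def using \<open>l \<in> L\<close> by blast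
qed

lemma adjoin_h: "subgroup L G \<Longrightarrow> h \<in> carrier G \<Longrightarrow> h \<in> adjoin L h"
proof -
  assume "subgroup L G" "h \<in> carrier G"
  then have "h = \<one> \<otimes> h [^] (1::int)" by simp
  then show "h \<in> adjoin L h" unfolding adjoin_def using subgroup.one_closed[OF \<open>subgroup L G\<close>] by blast
qed

lemma pow_in_dvd:
  assumes L: "subgroup L G" and h: "h \<in> carrier G"
    and m: "m > 0" "h [^] m \<in> L" "\<forall>k. 0 < k \<and> k < m \<longrightarrow> h [^] k \<notin> L"
    and k: "h [^] (k::int) \<in> L"
  shows "int m dvd k"
proof -
  define q where "q = k div int m"
  define r where "r = k mod int m"
  have kqr: "k = int m * q + r" unfolding q_def r_def by simp
  have r0: "0 \<le> r" "r < int m" unfolding r_def using m(1) by auto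
  have "h [^] k = h [^] (int m * q) \<otimes> h [^] r" using kqr h int_pow_mult by simp
  moreover have "h [^] (int m * q) = (h [^] m) [^] q" using int_pow_pow[OF h] int_pow_int by metis
  moreover have "(h [^] m) [^] q \<in> L" using sub_int_pow_closed[OF L m(2)] .
  ultimately have "h [^] r = inv ((h [^] m) [^] q) \<otimes> h [^] k"
    using h by (simp add: inv_solve_left)
  then have "h [^] r \<in> L" using k \<open>(h [^] m) [^] q \<in> L\<close> L
    by (simp add: subgroup.m_closed subgroup.m_inv_closed)
  then have "h [^] (nat r) \<in> L" using r0 int_pow_int[of G h "nat r"] by simp
  then have "nat r = 0" using m(3) r0 by (metis nat_less_iff not_gr0)
  then have "r = 0" using r0 by simp
  then show ?thesis using kqr by simp
qed

end


context comm_group begin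

definition ext_ch :: "'a set \<Rightarrow> 'a \<Rightarrow> ('a \<Rightarrow> 'k::field) \<Rightarrow> 'k \<Rightarrow> ('a \<Rightarrow> 'k)" where
  "ext_ch L h \<beta> t = (\<lambda>g. if g \<in> adjoin L h then
     (SOME v. \<exists>l i. l \<in> L \<and> g = l \<otimes> h [^] (i::int) \<and> v = \<beta> l * t powi i) else 0)"

lemma ext_welldef:
  assumes L: "subgroup L G" and h: "h \<in> carrier G"
    and m: "m > 0" "h [^] m \<in> L" "\<forall>k. 0 < k \<and> k < m \<longrightarrow> h [^] k \<notin> L"
    and b: "\<beta> \<in> chs (G\<lparr>carrier := L\<rparr>)" and t: "t ^ m = \<beta> (h [^] m)"
    and l: "l \<in> L" "l' \<in> L" and eq: "l \<otimes> h [^] (i::int) = l' \<otimes> h [^] (j::int)"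
  shows "\<beta> l * t powi i = \<beta> l' * t powi j"
proof -
  have Lc: "L \<subseteq> carrier G" using L subgroup.subset by blast
  have lc: "l \<in> carrier G" "l' \<in> carrier G" using l Lc by auto
  have "l' = (l \<otimes> h [^] i) \<otimes> inv (h [^] j)"
    using inv_solve_right[of l' "l \<otimes> h [^] i" "h [^] j"] lc h eq by simp
  also have "\<dots> = l \<otimes> h [^] (i - j)" using lc h by (simp add: int_pow_diff m_assoc)
  finally have l'eq: "l' = l \<otimes> h [^] (i - j)" .
  then have "inv l \<otimes> l' = h [^] (i - j)"
    using inv_solve_left[of "h [^] (i - j)" l l'] lc h by simp
  then have "h [^] (i - j) \<in> L" using l L by (metis subgroup.m_closed subgroup.m_inv_closed)
  then obtain q where q: "i - j = int m * q" using pow_in_dvd[OF L h m] by (metis dvdE)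
  have bnz: "\<beta> (h [^] m) \<noteq> 0" using sub_chs(4)[OF L b m(2)] .
  then have tnz: "t \<noteq> 0" using t m(1) by (metis zero_power)
  have "h [^] (i - j) = (h [^] m) [^] q" using q int_pow_pow[OF h] int_pow_int by metis
  then have "\<beta> (h [^] (i - j)) = \<beta> (h [^] m) powi q" using sub_chs(5)[OF L b m(2)] by simp
  also have "\<dots> = t powi (i - j)" using q t by (simp add: power_int_mult)
  finally have bh: "\<beta> (h [^] (i - j)) = t powi (i - j)" .
  have "\<beta> l' = \<beta> l * t powi (i - j)"
    using l'eq sub_chs(1)[OF L b l(1) \<open>h [^] (i - j) \<in> L\<close>] bh by simp
  then have "\<beta> l' * t powi j = \<beta> l * (t powi (i - j) * t powi j)" by simp
  also have "t powi (i - j) * t powi j = t powi i" using tnz by (simp flip: power_int_add)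
  finally show ?thesis by simp
qed

lemma ext_val:
  assumes L: "subgroup L G" and h: "h \<in> carrier G"
    and m: "m > 0" "h [^] m \<in> L" "\<forall>k. 0 < k \<and> k < m \<longrightarrow> h [^] k \<notin> L"
    and b: "\<beta> \<in> chs (G\<lparr>carrier := L\<rparr>)" and t: "t ^ m = \<beta> (h [^] m)"
    and l: "l \<in> L"
  shows "ext_ch L h \<beta> t (l \<otimes> h [^] (i::int)) = \<beta> l * t powi i"
proof -
  let ?g = "l \<otimes> h [^] i"
  have ing: "?g \<in> adjoin L h" unfolding adjoin_def using l by blast
  have ex: "\<exists>v l' i'. l' \<in> L \<and> ?g = l' \<otimes> h [^] (i'::int) \<and> v = \<beta> l' * t powi i'" using l by blast
  then have "\<exists>l' i'. l' \<in> L \<and> ?g = l' \<otimes> h [^] (i'::int) \<and>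
       (SOME v. \<exists>l i. l \<in> L \<and> ?g = l \<otimes> h [^] (i::int) \<and> v = \<beta> l * t powi i) = \<beta> l' * t powi i'"
    by (rule someI_ex[of "\<lambda>v. \<exists>l' i'. l' \<in> L \<and> ?g = l' \<otimes> h [^] (i'::int) \<and> v = \<beta> l' * t powi i'"]) 
  then obtain l' i' where l': "l' \<in> L" "?g = l' \<otimes> h [^] (i'::int)"
     "(SOME v. \<exists>l i. l \<in> L \<and> ?g = l \<otimes> h [^] (i::int) \<and> v = \<beta> l * t powi i) = \<beta> l' * t powi i'"
    by blast
  have "\<beta> l * t powi i = \<beta> l' * t powi i'" using ext_welldef[OF L h m b t l l'(1) l'(2)] .
  then show ?thesis unfolding ext_ch_def using ing l'(3) by simp
qed

lemma ext_chs:
  assumes L: "subgroup L G" and h: "h \<in> carrier G"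
    and m: "m > 0" "h [^] m \<in> L" "\<forall>k. 0 < k \<and> k < m \<longrightarrow> h [^] k \<notin> L"
    and b: "\<beta> \<in> chs (G\<lparr>carrier := L\<rparr>)" and t: "t ^ m = \<beta> (h [^] m)"
  shows "ext_ch L h \<beta> t \<in> chs (G\<lparr>carrier := adjoin L h\<rparr>)"
    and "\<forall>l\<in>L. ext_ch L h \<beta> t l = \<beta> l"
    and "ext_ch L h \<beta> t h = t"
proof -
  have Lc: "L \<subseteq> carrier G" using L subgroup.subset by blast
  note ev = ext_val[OF L h m b t]
  show "\<forall>l\<in>L. ext_ch L h \<beta> t l = \<beta> l"
  proof
    fix l assume l: "l \<in> L"
    then have "l = l \<otimes> h [^] (0::int)" using Lc by auto
    then show "ext_ch L h \<beta> t l = \<beta> l" using ev[OF l, of 0] by simp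
  qed
  have "h = \<one> \<otimes> h [^] (1::int)" using h by simp
  then show "ext_ch L h \<beta> t h = t" using ev[OF subgroup.one_closed[OF L], of 1] sub_chs(2)[OF L b] by simp
  show "ext_ch L h \<beta> t \<in> chs (G\<lparr>carrier := adjoin L h\<rparr>)"
    unfolding chs_def
  proof (intro CollectI conjI allI impI ballI)
    fix x y assume x: "x \<in> carrier (G\<lparr>carrier := adjoin L h\<rparr>)" and y: "y \<in> carrier (G\<lparr>carrier := adjoin L h\<rparr>)"
    obtain l i where li: "l \<in> L" "x = l \<otimes> h [^] (i::int)" using x unfolding adjoin_def by auto
    obtain l' j where lj: "l' \<in> L" "y = l' \<otimes> h [^] (j::int)" using y unfolding adjoin_def by auto
    have xy: "x \<otimes> y = (l \<otimes> l') \<otimes> h [^] (i + j)"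
      using li lj Lc h by (simp add: int_pow_mult m_ac subsetD)
    have "t ^ m \<noteq> 0" using t sub_chs(4)[OF L b m(2)] by simp
    then have tnz: "t \<noteq> 0" using m(1) by auto
    have "ext_ch L h \<beta> t (x \<otimes> y) = \<beta> (l \<otimes> l') * t powi (i + j)"
      using xy ev[OF subgroup.m_closed[OF L li(1) lj(1)]] by simp
    also have "\<dots> = (\<beta> l * t powi i) * (\<beta> l' * t powi j)"
      using sub_chs(1)[OF L b li(1) lj(1)] tnz by (simp add: power_int_add)
    also have "\<dots> = ext_ch L h \<beta> t x * ext_ch L h \<beta> t y" using li lj ev by simp
    finally show "ext_ch L h \<beta> t (x \<otimes>\<^bsub>G\<lparr>carrier := adjoin L h\<rparr>\<^esub> y) = ext_ch L h \<beta> t x * ext_ch L h \<beta> t y" by simp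
  next
    have "\<one> = \<one> \<otimes> h [^] (0::int)" by simp
    then show "ext_ch L h \<beta> t \<one>\<^bsub>G\<lparr>carrier := adjoin L h\<rparr>\<^esub> = 1"
      using ev[OF subgroup.one_closed[OF L], of 0] sub_chs(2)[OF L b] by simp
  next
    fix x assume "x \<notin> carrier (G\<lparr>carrier := adjoin L h\<rparr>)"
    then show "ext_ch L h \<beta> t x = 0" unfolding ext_ch_def by simp
  qed
qed

end


context comm_group begin

lemma least_pow:
  assumes fin: "finite (carrier G)" and L: "subgroup L G" and h: "h \<in> carrier G"
  obtains m :: nat where "m > 0" "h [^] m \<in> L" "\<forall>k. 0 < k \<and> k < m \<longrightarrow> h [^] k \<notin> L"
proof -
  define P where "P = (\<lambda>k::nat. 0 < k \<and> h [^] k \<in> L)"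
  have "order G > 0" using fin unfolding order_def by (metis card_gt_0_iff empty_iff one_closed)
  then have "P (order G)" unfolding P_def using pow_order_eq_1[OF h] subgroup.one_closed[OF L] by simp
  then have Pm: "P (LEAST k. P k)" by (rule LeastI)
  have "\<forall>k. 0 < k \<and> k < (LEAST k. P k) \<longrightarrow> h [^] k \<notin> L"
    using not_less_Least unfolding P_def by blast
  then show ?thesis using that Pm unfolding P_def by blast
qed

lemma ext_all:
  assumes fin: "finite (carrier G)" and ac: "alg_closed TYPE('k::field)"
  shows "subgroup L G \<Longrightarrow> (\<beta>::'a \<Rightarrow> 'k) \<in> chs (G\<lparr>carrier := L\<rparr>) \<Longrightarrow> \<exists>\<chi>. \<chi> \<in> chs G \<and> (\<forall>l\<in>L. \<chi> l = \<beta> l)"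
proof (induction "card (carrier G - L)" arbitrary: L \<beta> rule: less_induct)
  case less
  show ?case
  proof (cases "L = carrier G")
    case True then show ?thesis using less.prems chs_cong_carrier by metis
  next
    case False
    then obtain h where h: "h \<in> carrier G" "h \<notin> L" using subgroup.subset[OF less.prems(1)] by blast
    obtain m :: nat where m: "m > 0" "h [^] m \<in> L" "\<forall>k. 0 < k \<and> k < m \<longrightarrow> h [^] k \<notin> L"
      using least_pow[OF fin less.prems(1) h(1)] by blast
    obtain t :: 'k where t: "t ^ m = \<beta> (h [^] m)" using alg_closed_root[OF ac, of m] m(1) by auto
    note e = ext_chs[OF less.prems(1) h(1) m less.prems(2) t]
    have sub: "subgroup (adjoin L h) G" using adjoin_subgroup[OF less.prems(1) h(1)] .
    have "carrier G - adjoin L h \<subset> carrier G - L"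
      using adjoin_sup[OF less.prems(1) h(1)] adjoin_h[OF less.prems(1) h(1)] h by blast
    then have "card (carrier G - adjoin L h) < card (carrier G - L)"
      using fin by (meson finite_Diff psubset_card_mono)
    then obtain \<chi> :: "'a \<Rightarrow> 'k" where c: "\<chi> \<in> chs G" "\<forall>l\<in>adjoin L h. \<chi> l = ext_ch L h \<beta> t l"
      using less.hyps[OF _ sub e(1)] by blast
    have "\<forall>l\<in>L. \<chi> l = \<beta> l"
    proof
      fix l assume "l \<in> L"
      then show "\<chi> l = \<beta> l" using c(2) e(2) adjoin_sup[OF less.prems(1) h(1)] by auto
    qed
    then show ?thesis using c(1) by blast
  qed
qed

lemma separate:
  assumes fin: "finite (carrier G)" and ac: "alg_closed TYPE('k::field_char_0)"
    and x: "x \<in> carrier G" "x \<noteq> \<one>"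
  shows "\<exists>\<chi>::'a \<Rightarrow> 'k. \<chi> \<in> chs G \<and> \<chi> x \<noteq> 1"
proof -
  have L: "subgroup {\<one>} G" by (rule triv_subgroup)
  define \<beta> :: "'a \<Rightarrow> 'k" where "\<beta> = (\<lambda>g. if g = \<one> then 1 else 0)"
  have b: "\<beta> \<in> chs (G\<lparr>carrier := {\<one>}\<rparr>)" unfolding chs_def \<beta>_def by auto
  obtain m :: nat where m: "m > 0" "x [^] m \<in> {\<one>}" "\<forall>k. 0 < k \<and> k < m \<longrightarrow> x [^] k \<notin> {\<one>}"
    using least_pow[OF fin L x(1)] by blast
  have "m \<noteq> 1" using m(2) x by auto
  then have "m \<ge> 2" using m(1) by simp
  then obtain t :: 'k where t: "t ^ m = 1" "t \<noteq> 1" using alg_closed_root_unity[OF ac] by blast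
  have t': "t ^ m = \<beta> (x [^] m)" using t(1) m(2) unfolding \<beta>_def by simp
  note e = ext_chs[OF L x(1) m b t']
  obtain \<chi> where "\<chi> \<in> chs G" "\<forall>l\<in>adjoin {\<one>} x. \<chi> l = ext_ch {\<one>} x \<beta> t l"
    using ext_all[OF fin ac adjoin_subgroup[OF L x(1)] e(1)] by blast
  then show ?thesis using e(3) adjoin_h[OF L x(1)] t(2) by auto
qed

end


definition conv :: "('a,'b) monoid_scheme \<Rightarrow> ('a \<Rightarrow> 'k::field) \<Rightarrow> ('a \<Rightarrow> 'k) \<Rightarrow> ('a \<Rightarrow> 'k)" where
  "conv M f g = (\<lambda>x. if x \<in> carrier M then (\<Sum>a\<in>carrier M. f a * g (inv\<^bsub>M\<^esub> a \<otimes>\<^bsub>M\<^esub> x)) else 0)"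

definition dl :: "('a,'b) monoid_scheme \<Rightarrow> 'a \<Rightarrow> ('a \<Rightarrow> 'k::field)" where
  "dl M h = (\<lambda>x. if x = h then 1 else 0)"

definition supp :: "('a,'b) monoid_scheme \<Rightarrow> ('a \<Rightarrow> 'k::field) \<Rightarrow> bool" where
  "supp M f \<longleftrightarrow> (\<forall>x. x \<notin> carrier M \<longrightarrow> f x = 0)"

locale fgroup = group + assumes fin: "finite (carrier G)"

context group begin

lemma sum_shift_left:
  assumes "b \<in> carrier G"
  shows "(\<Sum>a\<in>carrier G. F a) = (\<Sum>c\<in>carrier G. F (b \<otimes> c))"
proof -
  have "(\<Sum>a\<in>carrier G. F a) = (\<Sum>a\<in>(\<lambda>c. b \<otimes> c) ` carrier G. F a)"
    using surj_const_mult[OF assms] by simp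
  also have "\<dots> = (\<Sum>c\<in>carrier G. F (b \<otimes> c))"
    using sum.reindex[OF inj_on_cmult[OF assms]] by simp
  finally show ?thesis .
qed

end

context fgroup begin

lemma conv_assoc: "conv G (conv G f g) h = conv G f (conv G g h)"
proof
  fix x show "conv G (conv G f g) h x = conv G f (conv G g h) x"
  proof (cases "x \<in> carrier G")
    case False then show ?thesis unfolding conv_def by simp
  next
    case x: True
    have "conv G (conv G f g) h x = (\<Sum>a\<in>carrier G. (\<Sum>b\<in>carrier G. f b * g (inv b \<otimes> a)) * h (inv a \<otimes> x))"
      unfolding conv_def using x by simp
    also have "\<dots> = (\<Sum>b\<in>carrier G. \<Sum>a\<in>carrier G. f b * (g (inv b \<otimes> a) * h (inv a \<otimes> x)))"
      unfolding sum_distrib_right mult.assoc by (rule sum.swap)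
    also have "\<dots> = (\<Sum>b\<in>carrier G. \<Sum>c\<in>carrier G. f b * (g c * h (inv c \<otimes> (inv b \<otimes> x))))"
    proof (rule sum.cong[OF refl])
      fix b assume b: "b \<in> carrier G"
      have "(\<Sum>a\<in>carrier G. f b * (g (inv b \<otimes> a) * h (inv a \<otimes> x)))
          = (\<Sum>c\<in>carrier G. f b * (g (inv b \<otimes> (b \<otimes> c)) * h (inv (b \<otimes> c) \<otimes> x)))"
        by (rule sum_shift_left[OF b])
      also have "\<dots> = (\<Sum>c\<in>carrier G. f b * (g c * h (inv c \<otimes> (inv b \<otimes> x))))"
      proof (intro sum.cong refl)
        fix c assume c: "c \<in> carrier G"
        have e1: "inv b \<otimes> (b \<otimes> c) = c" using b c by (simp add: m_assoc[symmetric])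
        have e2: "inv (b \<otimes> c) \<otimes> x = inv c \<otimes> (inv b \<otimes> x)" using b c x by (simp add: m_assoc inv_mult_group)
        show "f b * (g (inv b \<otimes> (b \<otimes> c)) * h (inv (b \<otimes> c) \<otimes> x)) = f b * (g c * h (inv c \<otimes> (inv b \<otimes> x)))"
          using e1 e2 by simp
      qed
      finally show "(\<Sum>a\<in>carrier G. f b * (g (inv b \<otimes> a) * h (inv a \<otimes> x)))
          = (\<Sum>c\<in>carrier G. f b * (g c * h (inv c \<otimes> (inv b \<otimes> x))))" .
    qed
    also have "\<dots> = conv G f (conv G g h) x"
      unfolding conv_def using x by (simp add: sum_distrib_left)
    finally show ?thesis .
  qed
qed

lemma conv_dl_left:
  assumes "h \<in> carrier G"
  shows "conv G (dl G h) f = (\<lambda>x. if x \<in> carrier G then f (inv h \<otimes> x) else 0)"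
proof
  fix x show "conv G (dl G h) f x = (if x \<in> carrier G then f (inv h \<otimes> x) else 0)"
  proof (cases "x \<in> carrier G")
    case True
    have "(\<Sum>a\<in>carrier G. dl G h a * f (inv a \<otimes> x)) = (\<Sum>a\<in>carrier G. if a = h then f (inv a \<otimes> x) else 0)"
      unfolding dl_def by (intro sum.cong refl) auto
    also have "\<dots> = f (inv h \<otimes> x)" using assms sum.delta[OF fin, of h "\<lambda>a. f (inv a \<otimes> x)"] by simp
    finally show ?thesis unfolding conv_def using True by simp
  qed (simp add: conv_def)
qed

lemma conv_dl_right:
  assumes "h \<in> carrier G"
  shows "conv G f (dl G h) = (\<lambda>x. if x \<in> carrier G then f (x \<otimes> inv h) else 0)"
proof
  fix x show "conv G f (dl G h) x = (if x \<in> carrier G then f (x \<otimes> inv h) else 0)"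
  proof (cases "x \<in> carrier G")
    case True
    have "(\<Sum>a\<in>carrier G. f a * dl G h (inv a \<otimes> x)) = (\<Sum>a\<in>carrier G. if x \<otimes> inv h = a then f a else 0)"
    proof (rule sum.cong[OF refl])
      fix a assume a: "a \<in> carrier G"
      have "(inv a \<otimes> x = h) = (a = x \<otimes> inv h)"
        using a True assms by (metis inv_closed inv_solve_left inv_solve_right m_closed)
      then show "f a * dl G h (inv a \<otimes> x) = (if x \<otimes> inv h = a then f a else 0)" unfolding dl_def by auto
    qed
    also have "\<dots> = f (x \<otimes> inv h)" using True assms sum.delta'[OF fin, of "x \<otimes> inv h" f] by simp
    finally show ?thesis unfolding conv_def using True by simp
  qed (simp add: conv_def)
qed

lemma conv_one_left:
  assumes "supp G f"
  shows "conv G (dl G \<one>) f = f"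
  using assms unfolding conv_dl_left[OF one_closed] supp_def by auto

lemma conv_one_right:
  assumes "supp G f"
  shows "conv G f (dl G \<one>) = f"
  using assms unfolding conv_dl_right[OF one_closed] supp_def by auto

lemma conv_supp: "supp G (conv G f g)"
  unfolding supp_def conv_def by simp

lemma conv_scale_left: "conv G (\<lambda>x. c * f x) g = (\<lambda>x. c * conv G f g x)"
  unfolding conv_def by (auto simp: sum_distrib_left mult.assoc)

end


lemma (in group) tmult_conv: "tmult G F F' = conv (G \<times>\<times> G) F F'"
proof
  fix p :: "'a \<times> 'a"
  obtain x y where p: "p = (x, y)" by fastforce
  show "tmult G F F' p = conv (G \<times>\<times> G) F F' p"
  proof (cases "x \<in> carrier G \<and> y \<in> carrier G")
    case True
    have "(\<Sum>(a, b)\<in>carrier G \<times> carrier G. F (a, b) * F' (inv a \<otimes> x, inv b \<otimes> y))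
       = (\<Sum>q\<in>carrier (G \<times>\<times> G). F q * F' (inv\<^bsub>G \<times>\<times> G\<^esub> q \<otimes>\<^bsub>G \<times>\<times> G\<^esub> (x, y)))"
      by (intro sum.cong) (auto simp: inv_DirProd[OF is_group is_group])
    then show ?thesis unfolding tmult_def conv_def p using True by simp
  next
    case False then show ?thesis unfolding tmult_def conv_def p by auto
  qed
qed

lemma (in fgroup) fgroup_DirProd: "fgroup (G \<times>\<times> G)"
  unfolding fgroup_def fgroup_axioms_def using DirProd_group[OF is_group is_group] fin by simp

lemma (in fgroup) tmult_assoc: "tmult G (tmult G A B) C = tmult G A (tmult G B C)"
proof -
  interpret D: fgroup "G \<times>\<times> G" by (rule fgroup_DirProd)
  show ?thesis unfolding tmult_conv by (rule D.conv_assoc)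
qed

lemma (in fgroup) tunit_dl: "tunit G = dl (G \<times>\<times> G) (\<one>, \<one>)"
  unfolding tunit_def dl_def by simp

lemma (in fgroup) tsupp_supp: "tsupp G F = supp (G \<times>\<times> G) F"
  unfolding tsupp_def supp_def by simp

lemma (in fgroup) tmult_unit_left: "tsupp G F \<Longrightarrow> tmult G (tunit G) F = F"
  unfolding tmult_conv tunit_dl tsupp_supp using fgroup.conv_one_left[OF fgroup_DirProd] by simp

lemma (in fgroup) tmult_unit_right: "tsupp G F \<Longrightarrow> tmult G F (tunit G) = F"
  unfolding tmult_conv tunit_dl tsupp_supp using fgroup.conv_one_right[OF fgroup_DirProd] by simp

lemma (in fgroup) tmult_tsupp: "tsupp G (tmult G F F')"
  unfolding tsupp_def tmult_def by auto

definition tens :: "('a \<Rightarrow> 'k::field) \<Rightarrow> ('a \<Rightarrow> 'k) \<Rightarrow> ('a \<times> 'a \<Rightarrow> 'k)" where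
  "tens f g = (\<lambda>(x, y). f x * g y)"

lemma (in fgroup) tmult_tens:
  "tmult G (tens f1 f2) (tens g1 g2) = (\<lambda>(x, y). conv G f1 g1 x * conv G f2 g2 y)"
proof
  fix p :: "'a \<times> 'a"
  obtain x y where p: "p = (x, y)" by fastforce
  show "tmult G (tens f1 f2) (tens g1 g2) p = (\<lambda>(x, y). conv G f1 g1 x * conv G f2 g2 y) p"
  proof (cases "x \<in> carrier G \<and> y \<in> carrier G")
    case True
    have "(\<Sum>(a, b)\<in>carrier G \<times> carrier G. tens f1 f2 (a, b) * tens g1 g2 (inv a \<otimes> x, inv b \<otimes> y))
        = (\<Sum>a\<in>carrier G. \<Sum>b\<in>carrier G. (f1 a * g1 (inv a \<otimes> x)) * (f2 b * g2 (inv b \<otimes> y)))"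
      unfolding tens_def sum.cartesian_product by (intro sum.cong) (auto simp: algebra_simps)
    also have "\<dots> = (\<Sum>a\<in>carrier G. f1 a * g1 (inv a \<otimes> x)) * (\<Sum>b\<in>carrier G. f2 b * g2 (inv b \<otimes> y))"
      by (simp add: sum_product)
    finally show ?thesis unfolding tmult_def conv_def p using True by simp
  next
    case False then show ?thesis unfolding tmult_def conv_def p by auto
  qed
qed

lemma tmult_sum_left:
  "tmult G (\<lambda>z. \<Sum>i\<in>I. c i * F i z) F' = (\<lambda>z. \<Sum>i\<in>I. c i * tmult G (F i) F' z)"
proof
  fix p :: "'a \<times> 'a"
  obtain x y where p: "p = (x, y)" by fastforce
  show "tmult G (\<lambda>z. \<Sum>i\<in>I. c i * F i z) F' p = (\<Sum>i\<in>I. c i * tmult G (F i) F' p)"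
  proof (cases "x \<in> carrier G \<and> y \<in> carrier G")
    case True
    have "(\<Sum>(a, b)\<in>carrier G \<times> carrier G. (\<Sum>i\<in>I. c i * F i (a, b)) * F' (inv\<^bsub>G\<^esub> a \<otimes>\<^bsub>G\<^esub> x, inv\<^bsub>G\<^esub> b \<otimes>\<^bsub>G\<^esub> y))
       = (\<Sum>(a, b)\<in>carrier G \<times> carrier G. \<Sum>i\<in>I. c i * (F i (a, b) * F' (inv\<^bsub>G\<^esub> a \<otimes>\<^bsub>G\<^esub> x, inv\<^bsub>G\<^esub> b \<otimes>\<^bsub>G\<^esub> y)))"
      by (intro sum.cong refl) (auto simp: sum_distrib_right mult.assoc)
    also have "\<dots> = (\<Sum>i\<in>I. c i * (\<Sum>(a, b)\<in>carrier G \<times> carrier G. F i (a, b) * F' (inv\<^bsub>G\<^esub> a \<otimes>\<^bsub>G\<^esub> x, inv\<^bsub>G\<^esub> b \<otimes>\<^bsub>G\<^esub> y)))"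
      unfolding case_prod_unfold sum_distrib_left by (rule sum.swap)
    finally show ?thesis unfolding tmult_def p using True by simp
  next
    case False then show ?thesis unfolding tmult_def p by auto
  qed
qed

lemma tmult_sum_right:
  "tmult G F' (\<lambda>z. \<Sum>i\<in>I. c i * F i z) = (\<lambda>z. \<Sum>i\<in>I. c i * tmult G F' (F i) z)"
proof
  fix p :: "'a \<times> 'a"
  obtain x y where p: "p = (x, y)" by fastforce
  show "tmult G F' (\<lambda>z. \<Sum>i\<in>I. c i * F i z) p = (\<Sum>i\<in>I. c i * tmult G F' (F i) p)"
  proof (cases "x \<in> carrier G \<and> y \<in> carrier G")
    case True
    have "(\<Sum>(a, b)\<in>carrier G \<times> carrier G. F' (a, b) * (\<Sum>i\<in>I. c i * F i (inv\<^bsub>G\<^esub> a \<otimes>\<^bsub>G\<^esub> x, inv\<^bsub>G\<^esub> b \<otimes>\<^bsub>G\<^esub> y)))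
       = (\<Sum>(a, b)\<in>carrier G \<times> carrier G. \<Sum>i\<in>I. c i * (F' (a, b) * F i (inv\<^bsub>G\<^esub> a \<otimes>\<^bsub>G\<^esub> x, inv\<^bsub>G\<^esub> b \<otimes>\<^bsub>G\<^esub> y)))"
      by (intro sum.cong refl) (auto simp: sum_distrib_left algebra_simps)
    also have "\<dots> = (\<Sum>i\<in>I. c i * (\<Sum>(a, b)\<in>carrier G \<times> carrier G. F' (a, b) * F i (inv\<^bsub>G\<^esub> a \<otimes>\<^bsub>G\<^esub> x, inv\<^bsub>G\<^esub> b \<otimes>\<^bsub>G\<^esub> y)))"
      unfolding case_prod_unfold sum_distrib_left by (rule sum.swap)
    finally show ?thesis unfolding tmult_def p using True by simp
  next
    case False then show ?thesis unfolding tmult_def p by auto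
  qed
qed


locale setting = fgroup G for G :: "('a, 'b) monoid_scheme" (structure) +
  fixes H :: "'a set" and \<omega> :: "('a \<Rightarrow> 'k::field_char_0) \<Rightarrow> ('a \<Rightarrow> 'k) \<Rightarrow> 'k"
  assumes ac: "alg_closed TYPE('k)" and subH: "subgroup H G"
    and commH: "\<forall>x\<in>H. \<forall>y\<in>H. x \<otimes> y = y \<otimes> x" and coc: "is_2cocycle G H \<omega>"
begin

lemma HH_comm: "comm_group (G\<lparr>carrier := H\<rparr>)"
  using group.group_comm_groupI[OF subgroup_imp_group[OF subH]] commH by simp

interpretation HH: comm_group "G\<lparr>carrier := H\<rparr>" by (rule HH_comm)

lemma HH_fin: "finite H"
  using fin subgroup.subset[OF subH] finite_subset by blast

lemma Hc: "H \<subseteq> carrier G" using subgroup.subset[OF subH] .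

lemma inH: "x \<in> H \<Longrightarrow> x \<in> carrier G" using Hc by blast

abbreviation "C \<equiv> (chars G H :: ('a \<Rightarrow> 'k) set)"

lemma C_chs: "C = chs (G\<lparr>carrier := H\<rparr>)" by (rule chars_chs)

lemma one_ch_HH: "one_ch (G\<lparr>carrier := H\<rparr>) = char_one H"
  unfolding one_ch_def char_one_def by simp

lemma finC: "finite C"
  unfolding C_chs using HH.finite_chs HH_fin by simp

lemma charmult: "\<alpha> \<in> C \<Longrightarrow> \<beta> \<in> C \<Longrightarrow> char_mult H \<alpha> \<beta> = (\<lambda>x. \<alpha> x * \<beta> x)"
  unfolding char_mult_def chars_def by auto

lemma C_mult: "\<alpha> \<in> C \<Longrightarrow> \<beta> \<in> C \<Longrightarrow> (\<lambda>x. \<alpha> x * \<beta> x) \<in> C"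
proof -
  assume a: "\<alpha> \<in> C" and b: "\<beta> \<in> C"
  have "\<forall>x\<in>H. \<forall>y\<in>H. \<alpha> (x \<otimes> y) * \<beta> (x \<otimes> y) = \<alpha> x * \<beta> x * (\<alpha> y * \<beta> y)"
    using a b unfolding chars_def by (simp add: algebra_simps)
  moreover have "\<alpha> \<one> * \<beta> \<one> = 1" using a b unfolding chars_def by simp
  moreover have "\<forall>x. x \<notin> H \<longrightarrow> \<alpha> x * \<beta> x = 0" using a b unfolding chars_def by simp
  ultimately show ?thesis unfolding chars_def by simp
qed

lemma charmult_C: "\<alpha> \<in> C \<Longrightarrow> \<beta> \<in> C \<Longrightarrow> char_mult H \<alpha> \<beta> \<in> C"
  using charmult C_mult by simp

lemma one_C: "char_one H \<in> C"
  unfolding chars_def char_one_def using subgroup.one_closed[OF subH] subgroupE(4)[OF subH] by auto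

lemma chgrp: "ch_grp (G\<lparr>carrier := H\<rparr>) C"
  unfolding ch_grp_def
proof (intro conjI ballI)
  show "C \<subseteq> chs (G\<lparr>carrier := H\<rparr>)" using C_chs by simp
  show "finite C" using finC .
  show "one_ch (G\<lparr>carrier := H\<rparr>) \<in> C" unfolding one_ch_HH using one_C .
  fix \<alpha> \<beta> assume "\<alpha> \<in> C" "\<beta> \<in> C" then show "(\<lambda>x. \<alpha> x * \<beta> x) \<in> C" using C_mult by simp
qed

lemma Cv:
  assumes "\<alpha> \<in> C"
  shows "x \<in> H \<Longrightarrow> y \<in> H \<Longrightarrow> \<alpha> (x \<otimes> y) = \<alpha> x * \<alpha> y"
    and "\<alpha> \<one> = 1" and "x \<notin> H \<Longrightarrow> \<alpha> x = 0"
    and "x \<in> H \<Longrightarrow> \<alpha> x \<noteq> 0"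
    and "x \<in> H \<Longrightarrow> \<alpha> (inv x) = inverse (\<alpha> x)"
proof -
  have a: "\<alpha> \<in> chs (G\<lparr>carrier := H\<rparr>)" using assms C_chs by simp
  show "x \<in> H \<Longrightarrow> y \<in> H \<Longrightarrow> \<alpha> (x \<otimes> y) = \<alpha> x * \<alpha> y" using chsD(1)[OF a] by simp
  show "\<alpha> \<one> = 1" using chsD(2)[OF a] by simp
  show "x \<notin> H \<Longrightarrow> \<alpha> x = 0" using chsD(3)[OF a] by simp
  show "x \<in> H \<Longrightarrow> \<alpha> x \<noteq> 0" using HH.chs_nz[OF a] by simp
  show "x \<in> H \<Longrightarrow> \<alpha> (inv x) = inverse (\<alpha> x)" using HH.chs_inv'[OF a, of x] m_inv_consistent[OF subH] by simp
qed

lemma K_triv: "{x \<in> H. \<forall>\<chi>\<in>C. \<chi> x = 1} = {\<one>}"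
proof
  show "{x \<in> H. \<forall>\<chi>\<in>C. \<chi> x = 1} \<subseteq> {\<one>}"
  proof
    fix x assume x: "x \<in> {x \<in> H. \<forall>\<chi>\<in>C. \<chi> x = 1}"
    show "x \<in> {\<one>}"
    proof (rule ccontr)
      assume "x \<notin> {\<one>}"
      then obtain \<chi> :: "'a \<Rightarrow> 'k" where "\<chi> \<in> chs (G\<lparr>carrier := H\<rparr>)" "\<chi> x \<noteq> 1"
        using HH.separate[OF _ ac, of x] HH_fin x by auto
      then show False using x C_chs by auto
    qed
  qed
  show "{\<one>} \<subseteq> {x \<in> H. \<forall>\<chi>\<in>C. \<chi> x = 1}" using Cv(2) subgroup.one_closed[OF subH] by auto
qed

lemma cardC: "card C = card H"
  using HH.T_count[OF _ chgrp] HH_fin K_triv by (simp add: order_def)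

lemma sumC: "x \<in> H \<Longrightarrow> (\<Sum>\<alpha>\<in>C. \<alpha> x) = (if x = \<one> then of_nat (card H) else 0)"
  using HH.T_sum[OF chgrp, of x] K_triv cardC by auto

lemma sumH: "\<alpha> \<in> C \<Longrightarrow> (\<Sum>x\<in>H. \<alpha> x) = (if \<alpha> = char_one H then of_nat (card H) else 0)"
  using HH.chs_sum[of \<alpha>, unfolded one_ch_HH] C_chs by (simp add: order_def)

lemma n_nz: "(of_nat (card H) :: 'k) \<noteq> 0"
  using HH_fin subgroup.one_closed[OF subH] by (simp add: card_gt_0_iff) (metis card_0_eq empty_iff)

lemma C_inv: "\<alpha> \<in> C \<Longrightarrow> (\<lambda>a. if a \<in> H then \<alpha> (inv a) else 0) \<in> C"
proof -
  assume a: "\<alpha> \<in> C"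
  have m: "\<alpha> (inv (x \<otimes> y)) = \<alpha> (inv x) * \<alpha> (inv y)" if "x \<in> H" "y \<in> H" for x y
  proof -
    have "inv (x \<otimes> y) = inv y \<otimes> inv x" using that inH by (simp add: inv_mult_group)
    moreover have "inv y \<in> H" "inv x \<in> H" using that subgroupE(3)[OF subH] by auto
    ultimately show ?thesis using Cv(1)[OF a] by (simp add: mult.commute)
  qed
  show ?thesis unfolding chars_def
    using m subgroupE(4)[OF subH] Cv(2)[OF a] subgroup.one_closed[OF subH] by auto
qed

lemma ortho:
  assumes a: "\<alpha> \<in> C" and g: "\<gamma> \<in> C"
  shows "(\<Sum>a\<in>H. \<alpha> (inv a) * \<gamma> a) = (if \<alpha> = \<gamma> then of_nat (card H) else 0)"
proof -
  define \<delta> where "\<delta> = (\<lambda>x. (if x \<in> H then \<alpha> (inv x) else 0) * \<gamma> x)"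
  have d: "\<delta> \<in> C" unfolding \<delta>_def using C_mult[OF C_inv[OF a] g] .
  have "(\<Sum>a\<in>H. \<alpha> (inv a) * \<gamma> a) = (\<Sum>a\<in>H. \<delta> a)" unfolding \<delta>_def by simp
  also have "\<dots> = (if \<delta> = char_one H then of_nat (card H) else 0)" using sumH[OF d] .
  also have "(\<delta> = char_one H) = (\<alpha> = \<gamma>)"
  proof
    assume "\<delta> = char_one H"
    then have "\<forall>x\<in>H. \<alpha> (inv x) * \<gamma> x = 1" unfolding \<delta>_def char_one_def
      by (metis (mono_tags, lifting))
    then have "\<forall>x\<in>H. \<gamma> x = \<alpha> x" using Cv(5)[OF a] Cv(4)[OF a] by (auto simp: field_simps)
    then show "\<alpha> = \<gamma>" using Cv(3)[OF a] Cv(3)[OF g] by (intro ext) (metis)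
  next
    assume "\<alpha> = \<gamma>"
    then show "\<delta> = char_one H" unfolding \<delta>_def char_one_def using Cv(5)[OF a] Cv(4)[OF a] Cv(3)[OF g]
      by (intro ext) auto
  qed
  finally show ?thesis .
qed

end


lemma (in group) conv_sum_left:
  "conv G (\<lambda>x. \<Sum>i\<in>I. c i * f i x) g = (\<lambda>x. \<Sum>i\<in>I. c i * conv G (f i) g x)"
proof
  fix x show "conv G (\<lambda>x. \<Sum>i\<in>I. c i * f i x) g x = (\<Sum>i\<in>I. c i * conv G (f i) g x)"
  proof (cases "x \<in> carrier G")
    case True
    have "(\<Sum>a\<in>carrier G. (\<Sum>i\<in>I. c i * f i a) * g (inv a \<otimes> x)) = (\<Sum>a\<in>carrier G. \<Sum>i\<in>I. c i * (f i a * g (inv a \<otimes> x)))"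
      by (simp add: sum_distrib_right mult.assoc)
    also have "\<dots> = (\<Sum>i\<in>I. c i * (\<Sum>a\<in>carrier G. f i a * g (inv a \<otimes> x)))"
      unfolding sum_distrib_left by (rule sum.swap)
    finally show ?thesis unfolding conv_def using True by simp
  qed (simp add: conv_def)
qed

lemma (in group) conv_sum_right:
  "conv G g (\<lambda>x. \<Sum>i\<in>I. c i * f i x) = (\<lambda>x. \<Sum>i\<in>I. c i * conv G g (f i) x)"
proof
  fix x show "conv G g (\<lambda>x. \<Sum>i\<in>I. c i * f i x) x = (\<Sum>i\<in>I. c i * conv G g (f i) x)"
  proof (cases "x \<in> carrier G")
    case True
    have "(\<Sum>a\<in>carrier G. g a * (\<Sum>i\<in>I. c i * f i (inv a \<otimes> x))) = (\<Sum>a\<in>carrier G. \<Sum>i\<in>I. c i * (g a * f i (inv a \<otimes> x)))"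
      by (simp add: sum_distrib_left algebra_simps)
    also have "\<dots> = (\<Sum>i\<in>I. c i * (\<Sum>a\<in>carrier G. g a * f i (inv a \<otimes> x)))"
      unfolding sum_distrib_left by (rule sum.swap)
    finally show ?thesis unfolding conv_def using True by simp
  qed (simp add: conv_def)
qed

context setting begin

abbreviation "nn \<equiv> (of_nat (card H) :: 'k)"

lemma sum_restrict:
  assumes "\<And>a. a \<in> carrier G \<Longrightarrow> a \<notin> H \<Longrightarrow> f a = 0"
  shows "(\<Sum>a\<in>carrier G. f a) = (\<Sum>a\<in>H. f a)"
  using sum.mono_neutral_right[OF fin Hc, of f] assms by auto

lemma idem_out: "x \<notin> H \<Longrightarrow> idem G H \<alpha> x = 0"
  unfolding idem_def by simp

lemma idem_in: "x \<in> H \<Longrightarrow> idem G H \<alpha> x = \<alpha> (inv x) / nn"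
  unfolding idem_def by simp

lemma sum_idem: "(\<Sum>\<alpha>\<in>C. idem G H \<alpha> x) = dl G \<one> x"
proof (cases "x \<in> H")
  case True
  have "(\<Sum>\<alpha>\<in>C. idem G H \<alpha> x) = (\<Sum>\<alpha>\<in>C. \<alpha> (inv x)) / nn"
    using True by (simp add: idem_in sum_divide_distrib)
  also have "\<dots> = (if inv x = \<one> then nn else 0) / nn"
    using sumC[of "inv x"] True subgroupE(3)[OF subH] by simp
  also have "\<dots> = dl G \<one> x" unfolding dl_def using n_nz True inH
    by (auto simp: inv_eq_1_iff)
  finally show ?thesis .
next
  case False
  then have "x \<noteq> \<one>" using subgroup.one_closed[OF subH] by auto
  then show ?thesis using False by (simp add: idem_out dl_def)
qed

lemma conv_idem:
  assumes a: "\<alpha> \<in> C" and g: "\<gamma> \<in> C"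
  shows "conv G (idem G H \<alpha>) (idem G H \<gamma>) x = (if \<alpha> = \<gamma> then idem G H \<alpha> x else 0)"
proof (cases "x \<in> H")
  case True
  then have x: "x \<in> carrier G" using inH by simp
  have "(\<Sum>a\<in>carrier G. idem G H \<alpha> a * idem G H \<gamma> (inv a \<otimes> x))
      = (\<Sum>a\<in>H. idem G H \<alpha> a * idem G H \<gamma> (inv a \<otimes> x))"
    by (rule sum_restrict) (simp add: idem_out)
  also have "\<dots> = (\<Sum>a\<in>H. \<gamma> (inv x) / (nn * nn) * (\<alpha> (inv a) * \<gamma> a))"
  proof (rule sum.cong[OF refl])
    fix a assume aH: "a \<in> H"
    have ax: "inv a \<otimes> x \<in> H" using aH True subgroupE(3,4)[OF subH] by simp
    have "inv (inv a \<otimes> x) = inv x \<otimes> a" using aH x inH by (simp add: inv_mult_group)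
    then have "\<gamma> (inv (inv a \<otimes> x)) = \<gamma> (inv x) * \<gamma> a"
      using Cv(1)[OF g] aH True subgroupE(3)[OF subH] by simp
    then show "idem G H \<alpha> a * idem G H \<gamma> (inv a \<otimes> x) = \<gamma> (inv x) / (nn * nn) * (\<alpha> (inv a) * \<gamma> a)"
      using aH ax by (simp add: idem_in field_simps)
  qed
  also have "\<dots> = \<gamma> (inv x) / (nn * nn) * (\<Sum>a\<in>H. \<alpha> (inv a) * \<gamma> a)"
    by (rule sum_distrib_left[symmetric])
  also have "\<dots> = \<gamma> (inv x) / (nn * nn) * (if \<alpha> = \<gamma> then nn else 0)"
    by (simp only: ortho[OF a g])
  also have "\<dots> = (if \<alpha> = \<gamma> then idem G H \<alpha> x else 0)"
    using n_nz True by (simp add: idem_in)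
  finally show ?thesis unfolding conv_def using x by simp
next
  case False
  show ?thesis
  proof (cases "x \<in> carrier G")
    case True
    have "idem G H \<alpha> a * idem G H \<gamma> (inv a \<otimes> x) = 0" if "a \<in> carrier G" for a
    proof (cases "a \<in> H")
      case aH: True
      have "inv a \<otimes> x \<notin> H"
      proof
        assume "inv a \<otimes> x \<in> H"
        then have "a \<otimes> (inv a \<otimes> x) \<in> H" using aH subgroupE(4)[OF subH] by simp
        then show False using False that True by (simp add: m_assoc[symmetric])
      qed
      then show ?thesis by (simp add: idem_out)
    qed (simp add: idem_out)
    then have "(\<Sum>a\<in>carrier G. idem G H \<alpha> a * idem G H \<gamma> (inv a \<otimes> x)) = 0"
      by (intro sum.neutral) blast
    then show ?thesis unfolding conv_def using False True by (simp add: idem_out)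
  qed (simp add: conv_def idem_out False)
qed

definition Ef :: "(('a \<Rightarrow> 'k) \<Rightarrow> 'k) \<Rightarrow> ('a \<Rightarrow> 'k)" where
  "Ef lf = (\<lambda>x. \<Sum>\<alpha>\<in>C. lf \<alpha> * idem G H \<alpha> x)"

lemma Ef_out: "x \<notin> H \<Longrightarrow> Ef lf x = 0"
  unfolding Ef_def by (simp add: idem_out)

lemma Ef_supp: "supp G (Ef lf)"
  unfolding supp_def using Ef_out inH by blast

lemma Ef_cong: "(\<And>\<alpha>. \<alpha> \<in> C \<Longrightarrow> lf \<alpha> = mf \<alpha>) \<Longrightarrow> Ef lf = Ef mf"
  unfolding Ef_def by (intro ext sum.cong) auto

lemma Ef_const: "Ef (\<lambda>_. c) = (\<lambda>x. c * dl G \<one> x)"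
  unfolding Ef_def by (simp add: sum_distrib_left[symmetric] sum_idem)

lemma Ef_mult: "conv G (Ef lf) (Ef mf) = Ef (\<lambda>\<alpha>. lf \<alpha> * mf \<alpha>)"
proof
  fix x
  have "conv G (Ef lf) (Ef mf) x = (\<Sum>\<alpha>\<in>C. lf \<alpha> * (\<Sum>\<beta>\<in>C. mf \<beta> * conv G (idem G H \<alpha>) (idem G H \<beta>) x))"
    unfolding Ef_def conv_sum_left conv_sum_right ..
  also have "\<dots> = (\<Sum>\<alpha>\<in>C. lf \<alpha> * (\<Sum>\<beta>\<in>C. if \<alpha> = \<beta> then mf \<beta> * idem G H \<alpha> x else 0))"
    by (intro sum.cong refl arg_cong2[where f="(*)"]) (auto simp: conv_idem)
  also have "\<dots> = (\<Sum>\<alpha>\<in>C. lf \<alpha> * (mf \<alpha> * idem G H \<alpha> x))"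
    using finC by (simp add: sum.delta)
  finally show "conv G (Ef lf) (Ef mf) x = Ef (\<lambda>\<alpha>. lf \<alpha> * mf \<alpha>) x"
    unfolding Ef_def by (simp add: mult.assoc)
qed

definition res :: "('a \<Rightarrow> 'k) \<Rightarrow> ('a \<Rightarrow> 'k)" where
  "res \<chi> = (\<lambda>x. if x \<in> H then \<chi> x else 0)"

lemma res_C: "\<chi> \<in> chs G \<Longrightarrow> res \<chi> \<in> C"
  unfolding res_def chars_def using chsD[of \<chi> G] subgroupE(4)[OF subH] subgroup.one_closed[OF subH] inH
  by auto

lemma idem_chi:
  assumes chi: "\<chi> \<in> chs G" and a: "\<alpha> \<in> C"
  shows "(\<Sum>x\<in>carrier G. idem G H \<alpha> x * \<chi> x) = (if \<alpha> = res \<chi> then 1 else 0)"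
proof -
  have "(\<Sum>x\<in>carrier G. idem G H \<alpha> x * \<chi> x) = (\<Sum>x\<in>H. idem G H \<alpha> x * \<chi> x)"
    by (rule sum_restrict) (simp add: idem_out)
  also have "\<dots> = (\<Sum>x\<in>H. \<alpha> (inv x) * res \<chi> x) / nn"
    by (simp add: idem_in res_def sum_divide_distrib)
  also have "\<dots> = (if \<alpha> = res \<chi> then 1 else 0)"
    using ortho[OF a res_C[OF chi]] n_nz by simp
  finally show ?thesis .
qed

end


context setting begin

abbreviation "e \<equiv> idem G H"

lemma twJ_sum:
  fixes a :: "('a \<Rightarrow> 'k) \<Rightarrow> ('a \<Rightarrow> 'k) \<Rightarrow> 'k"
  shows "twist_J G H a = (\<lambda>z. \<Sum>p\<in>C \<times> C. a (fst p) (snd p) * tens (e (fst p)) (e (snd p)) z)"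
proof
  fix z :: "'a \<times> 'a"
  obtain x y where z: "z = (x, y)" by fastforce
  show "twist_J G H a z = (\<Sum>p\<in>C \<times> C. a (fst p) (snd p) * tens (e (fst p)) (e (snd p)) z)"
    unfolding twist_J_def z tens_def by (simp add: sum.cartesian_product mult.assoc case_prod_unfold)
qed

lemma twJ_cong: "(\<And>\<alpha> \<beta>. \<alpha> \<in> C \<Longrightarrow> \<beta> \<in> C \<Longrightarrow> a \<alpha> \<beta> = b \<alpha> \<beta>) \<Longrightarrow> twist_J G H a = twist_J G H b"
  unfolding twist_J_def by (intro ext) (auto intro!: sum.cong)

lemma tens_idem_mult:
  assumes "p \<in> C \<times> C" "q \<in> C \<times> C"
  shows "tmult G (tens (e (fst p)) (e (snd p))) (tens (e (fst q)) (e (snd q))) z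
       = (if p = q then tens (e (fst p)) (e (snd p)) z else 0)"
proof -
  obtain x y where z: "z = (x, y)" by fastforce
  show ?thesis unfolding tmult_tens z using assms
    by (cases p, cases q) (auto simp: conv_idem tens_def)
qed

lemma tmult_twJ:
  fixes a b :: "('a \<Rightarrow> 'k) \<Rightarrow> ('a \<Rightarrow> 'k) \<Rightarrow> 'k"
  shows "tmult G (twist_J G H a) (twist_J G H b) = twist_J G H (\<lambda>\<alpha> \<beta>. a \<alpha> \<beta> * b \<alpha> \<beta>)"
proof
  fix z
  have "tmult G (twist_J G H a) (twist_J G H b) z
     = (\<Sum>p\<in>C \<times> C. a (fst p) (snd p) * (\<Sum>q\<in>C \<times> C. b (fst q) (snd q) *
          tmult G (tens (e (fst p)) (e (snd p))) (tens (e (fst q)) (e (snd q))) z))"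
    unfolding twJ_sum[of a] twJ_sum[of b] tmult_sum_left tmult_sum_right ..
  also have "\<dots> = (\<Sum>p\<in>C \<times> C. a (fst p) (snd p) * (\<Sum>q\<in>C \<times> C.
          if p = q then b (fst p) (snd p) * tens (e (fst p)) (e (snd p)) z else 0))"
    by (intro sum.cong refl arg_cong2[where f="(*)"]) (auto simp: tens_idem_mult)
  also have "\<dots> = (\<Sum>p\<in>C \<times> C. a (fst p) (snd p) * (b (fst p) (snd p) * tens (e (fst p)) (e (snd p)) z))"
    using finC by (intro sum.cong refl) (simp add: sum.delta)
  also have "\<dots> = twist_J G H (\<lambda>\<alpha> \<beta>. a \<alpha> \<beta> * b \<alpha> \<beta>) z"
    unfolding twJ_sum[of "\<lambda>\<alpha> \<beta>. a \<alpha> \<beta> * b \<alpha> \<beta>"] by (simp add: mult.assoc)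
  finally show "tmult G (twist_J G H a) (twist_J G H b) z = twist_J G H (\<lambda>\<alpha> \<beta>. a \<alpha> \<beta> * b \<alpha> \<beta>) z" .
qed

lemma twJ_one: "twist_J G H (\<lambda>_ _. 1::'k) = tunit G"
proof
  fix z :: "'a \<times> 'a"
  obtain x y where z: "z = (x, y)" by fastforce
  have "twist_J G H (\<lambda>_ _. 1::'k) z = (\<Sum>\<alpha>\<in>C. e \<alpha> x) * (\<Sum>\<beta>\<in>C. e \<beta> y)"
    unfolding twist_J_def z by (simp add: sum_product)
  also have "\<dots> = tunit G z" unfolding sum_idem z tunit_def dl_def by simp
  finally show "twist_J G H (\<lambda>_ _. 1::'k) z = tunit G z" .
qed

lemma twJ_tsupp:
  fixes a :: "('a \<Rightarrow> 'k) \<Rightarrow> ('a \<Rightarrow> 'k) \<Rightarrow> 'k"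
  shows "tsupp G (twist_J G H a)"
proof -
  have "\<And>x. x \<notin> carrier G \<Longrightarrow> x \<notin> H" using Hc by blast
  then show ?thesis unfolding tsupp_def twist_J_def by (auto simp: idem_out)
qed

lemma omega_nz: "\<alpha> \<in> C \<Longrightarrow> \<beta> \<in> C \<Longrightarrow> \<omega> \<alpha> \<beta> \<noteq> 0"
  using coc unfolding is_2cocycle_def by blast

lemma omega_cocycle: "\<alpha> \<in> C \<Longrightarrow> \<beta> \<in> C \<Longrightarrow> \<gamma> \<in> C \<Longrightarrow>
   \<omega> \<alpha> \<beta> * \<omega> (char_mult H \<alpha> \<beta>) \<gamma> = \<omega> \<beta> \<gamma> * \<omega> \<alpha> (char_mult H \<beta> \<gamma>)"
  using coc unfolding is_2cocycle_def by blast

lemma Jinv_eq: "twist_Jinv G H \<omega> = twist_J G H (\<lambda>\<alpha> \<beta>. inverse (\<omega> \<alpha> \<beta>))"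
  unfolding twist_Jinv_def
proof (rule the_equality)
  let ?X = "twist_J G H (\<lambda>\<alpha> \<beta>. inverse (\<omega> \<alpha> \<beta>))"
  have 1: "tmult G (twist_J G H \<omega>) ?X = tunit G"
    unfolding tmult_twJ twJ_one[symmetric] using omega_nz by (intro twJ_cong) simp
  have 2: "tmult G ?X (twist_J G H \<omega>) = tunit G"
    unfolding tmult_twJ twJ_one[symmetric] using omega_nz by (intro twJ_cong) simp
  show "tsupp G ?X \<and> tmult G (twist_J G H \<omega>) ?X = tunit G \<and> tmult G ?X (twist_J G H \<omega>) = tunit G"
    using 1 2 twJ_tsupp by simp
  fix X assume X: "tsupp G X \<and> tmult G (twist_J G H \<omega>) X = tunit G \<and> tmult G X (twist_J G H \<omega>) = tunit G"
  have "X = tmult G X (tunit G)" using tmult_unit_right[OF conjunct1[OF X]] by simp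
  also have "\<dots> = tmult G X (tmult G (twist_J G H \<omega>) ?X)" using 1 by simp
  also have "\<dots> = tmult G (tmult G X (twist_J G H \<omega>)) ?X" by (simp add: tmult_assoc)
  also have "\<dots> = ?X" using X tmult_unit_left[OF twJ_tsupp] by simp
  finally show "X = ?X" .
qed

end


definition Pm :: "('a,'b) monoid_scheme \<Rightarrow> ('a \<Rightarrow> 'k::field) \<Rightarrow> ('a \<times> 'a \<Rightarrow> 'k) \<Rightarrow> ('a \<Rightarrow> 'k)" where
  "Pm M \<chi> F = (\<lambda>y. if y \<in> carrier M then (\<Sum>x\<in>carrier M. F (x, y) * \<chi> x) else 0)"

definition Qm :: "('a,'b) monoid_scheme \<Rightarrow> ('a \<Rightarrow> 'k::field) \<Rightarrow> ('a \<times> 'a \<Rightarrow> 'k) \<Rightarrow> ('a \<Rightarrow> 'k)" where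
  "Qm M \<chi> F = (\<lambda>x. if x \<in> carrier M then (\<Sum>y\<in>carrier M. F (x, y) * \<chi> y) else 0)"

context fgroup begin

lemma shift_chi:
  assumes chi: "\<chi> \<in> chs G" and a: "a \<in> carrier G"
  shows "(\<Sum>x\<in>carrier G. K (inv a \<otimes> x) * \<chi> x) = \<chi> a * (\<Sum>c\<in>carrier G. K c * \<chi> c)"
proof -
  have "(\<Sum>x\<in>carrier G. K (inv a \<otimes> x) * \<chi> x) = (\<Sum>c\<in>carrier G. K (inv a \<otimes> (a \<otimes> c)) * \<chi> (a \<otimes> c))"
    by (rule sum_shift_left[OF a])
  also have "\<dots> = (\<Sum>c\<in>carrier G. \<chi> a * (K c * \<chi> c))"
  proof (rule sum.cong[OF refl])
    fix c assume c: "c \<in> carrier G"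
    have "inv a \<otimes> (a \<otimes> c) = c" using a c by (simp add: m_assoc[symmetric])
    then show "K (inv a \<otimes> (a \<otimes> c)) * \<chi> (a \<otimes> c) = \<chi> a * (K c * \<chi> c)"
      using chsD(1)[OF chi a c] by simp
  qed
  finally show ?thesis by (simp add: sum_distrib_left)
qed

lemma Pm_tmult:
  assumes chi: "\<chi> \<in> chs G"
  shows "Pm G \<chi> (tmult G F F') = conv G (Pm G \<chi> F) (Pm G \<chi> F')"
proof
  fix y show "Pm G \<chi> (tmult G F F') y = conv G (Pm G \<chi> F) (Pm G \<chi> F') y"
  proof (cases "y \<in> carrier G")
    case y: True
    have "Pm G \<chi> (tmult G F F') y
        = (\<Sum>x\<in>carrier G. (\<Sum>a\<in>carrier G. \<Sum>b\<in>carrier G. F (a, b) * F' (inv a \<otimes> x, inv b \<otimes> y)) * \<chi> x)"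
      unfolding Pm_def tmult_def using y by (simp add: sum.cartesian_product)
    also have "\<dots> = (\<Sum>a\<in>carrier G. \<Sum>b\<in>carrier G. F (a, b) * (\<Sum>x\<in>carrier G. F' (inv a \<otimes> x, inv b \<otimes> y) * \<chi> x))"
    proof -
      have "(\<Sum>x\<in>carrier G. (\<Sum>a\<in>carrier G. \<Sum>b\<in>carrier G. F (a, b) * F' (inv a \<otimes> x, inv b \<otimes> y)) * \<chi> x)
          = (\<Sum>x\<in>carrier G. \<Sum>a\<in>carrier G. \<Sum>b\<in>carrier G. F (a, b) * (F' (inv a \<otimes> x, inv b \<otimes> y) * \<chi> x))"
        by (simp add: sum_distrib_right mult.assoc)
      also have "\<dots> = (\<Sum>a\<in>carrier G. \<Sum>x\<in>carrier G. \<Sum>b\<in>carrier G. F (a, b) * (F' (inv a \<otimes> x, inv b \<otimes> y) * \<chi> x))"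
        by (rule sum.swap)
      also have "\<dots> = (\<Sum>a\<in>carrier G. \<Sum>b\<in>carrier G. \<Sum>x\<in>carrier G. F (a, b) * (F' (inv a \<otimes> x, inv b \<otimes> y) * \<chi> x))"
        by (rule sum.cong[OF refl], rule sum.swap)
      finally show ?thesis by (simp add: sum_distrib_left)
    qed
    also have "\<dots> = (\<Sum>a\<in>carrier G. \<Sum>b\<in>carrier G. F (a, b) * (\<chi> a * Pm G \<chi> F' (inv b \<otimes> y)))"
    proof (intro sum.cong refl)
      fix a b assume a: "a \<in> carrier G" and b: "b \<in> carrier G"
      have "(\<Sum>x\<in>carrier G. F' (inv a \<otimes> x, inv b \<otimes> y) * \<chi> x) = \<chi> a * (\<Sum>c\<in>carrier G. F' (c, inv b \<otimes> y) * \<chi> c)"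
        using shift_chi[OF chi a, of "\<lambda>u. F' (u, inv b \<otimes> y)"] by simp
      then show "F (a, b) * (\<Sum>x\<in>carrier G. F' (inv a \<otimes> x, inv b \<otimes> y) * \<chi> x) = F (a, b) * (\<chi> a * Pm G \<chi> F' (inv b \<otimes> y))"
        unfolding Pm_def using b y by simp
    qed
    also have "\<dots> = (\<Sum>b\<in>carrier G. \<Sum>a\<in>carrier G. F (a, b) * (\<chi> a * Pm G \<chi> F' (inv b \<otimes> y)))"
      by (rule sum.swap)
    also have "\<dots> = (\<Sum>b\<in>carrier G. Pm G \<chi> F b * Pm G \<chi> F' (inv b \<otimes> y))"
      unfolding Pm_def by (intro sum.cong refl) (simp add: sum_distrib_right algebra_simps)
    also have "\<dots> = conv G (Pm G \<chi> F) (Pm G \<chi> F') y" unfolding conv_def using y by simp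
    finally show ?thesis .
  qed (simp add: Pm_def conv_def)
qed

lemma Qm_tmult:
  assumes chi: "\<chi> \<in> chs G"
  shows "Qm G \<chi> (tmult G F F') = conv G (Qm G \<chi> F) (Qm G \<chi> F')"
proof
  fix x show "Qm G \<chi> (tmult G F F') x = conv G (Qm G \<chi> F) (Qm G \<chi> F') x"
  proof (cases "x \<in> carrier G")
    case x: True
    have "Qm G \<chi> (tmult G F F') x
        = (\<Sum>y\<in>carrier G. (\<Sum>a\<in>carrier G. \<Sum>b\<in>carrier G. F (a, b) * F' (inv a \<otimes> x, inv b \<otimes> y)) * \<chi> y)"
      unfolding Qm_def tmult_def using x by (simp add: sum.cartesian_product)
    also have "\<dots> = (\<Sum>a\<in>carrier G. \<Sum>b\<in>carrier G. F (a, b) * (\<Sum>y\<in>carrier G. F' (inv a \<otimes> x, inv b \<otimes> y) * \<chi> y))"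
    proof -
      have "(\<Sum>y\<in>carrier G. (\<Sum>a\<in>carrier G. \<Sum>b\<in>carrier G. F (a, b) * F' (inv a \<otimes> x, inv b \<otimes> y)) * \<chi> y)
          = (\<Sum>y\<in>carrier G. \<Sum>a\<in>carrier G. \<Sum>b\<in>carrier G. F (a, b) * (F' (inv a \<otimes> x, inv b \<otimes> y) * \<chi> y))"
        by (simp add: sum_distrib_right mult.assoc)
      also have "\<dots> = (\<Sum>a\<in>carrier G. \<Sum>y\<in>carrier G. \<Sum>b\<in>carrier G. F (a, b) * (F' (inv a \<otimes> x, inv b \<otimes> y) * \<chi> y))"
        by (rule sum.swap)
      also have "\<dots> = (\<Sum>a\<in>carrier G. \<Sum>b\<in>carrier G. \<Sum>y\<in>carrier G. F (a, b) * (F' (inv a \<otimes> x, inv b \<otimes> y) * \<chi> y))"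
        by (rule sum.cong[OF refl], rule sum.swap)
      finally show ?thesis by (simp add: sum_distrib_left)
    qed
    also have "\<dots> = (\<Sum>a\<in>carrier G. \<Sum>b\<in>carrier G. F (a, b) * (\<chi> b * Qm G \<chi> F' (inv a \<otimes> x)))"
    proof (intro sum.cong refl)
      fix a b assume a: "a \<in> carrier G" and b: "b \<in> carrier G"
      have "(\<Sum>y\<in>carrier G. F' (inv a \<otimes> x, inv b \<otimes> y) * \<chi> y) = \<chi> b * (\<Sum>c\<in>carrier G. F' (inv a \<otimes> x, c) * \<chi> c)"
        using shift_chi[OF chi b, of "\<lambda>u. F' (inv a \<otimes> x, u)"] by simp
      then show "F (a, b) * (\<Sum>y\<in>carrier G. F' (inv a \<otimes> x, inv b \<otimes> y) * \<chi> y) = F (a, b) * (\<chi> b * Qm G \<chi> F' (inv a \<otimes> x))"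
        unfolding Qm_def using a x by simp
    qed
    also have "\<dots> = (\<Sum>a\<in>carrier G. Qm G \<chi> F a * Qm G \<chi> F' (inv a \<otimes> x))"
      unfolding Qm_def by (intro sum.cong refl) (simp add: sum_distrib_right algebra_simps)
    also have "\<dots> = conv G (Qm G \<chi> F) (Qm G \<chi> F') x" unfolding conv_def using x by simp
    finally show ?thesis .
  qed (simp add: Qm_def conv_def)
qed

lemma Pm_delta:
  assumes h: "h \<in> carrier G"
  shows "Pm G \<chi> (\<lambda>p. if p = (h, h) then 1 else 0) = (\<lambda>y. \<chi> h * dl G h y)"
proof
  fix y show "Pm G \<chi> (\<lambda>p. if p = (h, h) then 1 else 0) y = \<chi> h * dl G h y"
  proof (cases "y \<in> carrier G")
    case True
    have "(\<Sum>x\<in>carrier G. (if (x, y) = (h, h) then 1 else 0) * \<chi> x) = (\<Sum>x\<in>carrier G. if x = h then (if y = h then \<chi> x else 0) else 0)"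
      by (intro sum.cong refl) auto
    also have "\<dots> = \<chi> h * dl G h y" using h fin by (simp add: sum.delta dl_def)
    finally show ?thesis unfolding Pm_def using True by simp
  qed (auto simp: Pm_def dl_def h)
qed

lemma Qm_delta:
  assumes h: "h \<in> carrier G"
  shows "Qm G \<chi> (\<lambda>p. if p = (h, h) then 1 else 0) = (\<lambda>y. \<chi> h * dl G h y)"
proof
  fix y show "Qm G \<chi> (\<lambda>p. if p = (h, h) then 1 else 0) y = \<chi> h * dl G h y"
  proof (cases "y \<in> carrier G")
    case True
    have "(\<Sum>x\<in>carrier G. (if (y, x) = (h, h) then 1 else 0) * \<chi> x) = (\<Sum>x\<in>carrier G. if x = h then (if y = h then \<chi> x else 0) else 0)"
      by (intro sum.cong refl) auto
    also have "\<dots> = \<chi> h * dl G h y" using h fin by (simp add: sum.delta dl_def)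
    finally show ?thesis unfolding Qm_def using True by simp
  qed (auto simp: Qm_def dl_def h)
qed

end

context setting begin

lemma Pm_twJ:
  fixes a :: "('a \<Rightarrow> 'k) \<Rightarrow> ('a \<Rightarrow> 'k) \<Rightarrow> 'k"
  assumes chi: "\<chi> \<in> chs G"
  shows "Pm G \<chi> (twist_J G H a) = Ef (\<lambda>\<beta>. a (res \<chi>) \<beta>)"
proof
  fix y show "Pm G \<chi> (twist_J G H a) y = Ef (\<lambda>\<beta>. a (res \<chi>) \<beta>) y"
  proof (cases "y \<in> carrier G")
    case True
    have "(\<Sum>x\<in>carrier G. twist_J G H a (x, y) * \<chi> x)
       = (\<Sum>x\<in>carrier G. \<Sum>\<alpha>\<in>C. \<Sum>\<beta>\<in>C. e \<beta> y * (a \<alpha> \<beta> * (e \<alpha> x * \<chi> x)))"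
      unfolding twist_J_def by (simp add: sum_distrib_right algebra_simps sum_distrib_left)
    also have "\<dots> = (\<Sum>\<alpha>\<in>C. \<Sum>\<beta>\<in>C. e \<beta> y * (a \<alpha> \<beta> * (\<Sum>x\<in>carrier G. e \<alpha> x * \<chi> x)))"
    proof -
      have "(\<Sum>x\<in>carrier G. \<Sum>\<alpha>\<in>C. \<Sum>\<beta>\<in>C. e \<beta> y * (a \<alpha> \<beta> * (e \<alpha> x * \<chi> x)))
          = (\<Sum>\<alpha>\<in>C. \<Sum>x\<in>carrier G. \<Sum>\<beta>\<in>C. e \<beta> y * (a \<alpha> \<beta> * (e \<alpha> x * \<chi> x)))" by (rule sum.swap)
      also have "\<dots> = (\<Sum>\<alpha>\<in>C. \<Sum>\<beta>\<in>C. \<Sum>x\<in>carrier G. e \<beta> y * (a \<alpha> \<beta> * (e \<alpha> x * \<chi> x)))"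
        by (rule sum.cong[OF refl], rule sum.swap)
      finally show ?thesis by (simp add: sum_distrib_left)
    qed
    also have "\<dots> = (\<Sum>\<alpha>\<in>C. if \<alpha> = res \<chi> then (\<Sum>\<beta>\<in>C. e \<beta> y * a (res \<chi>) \<beta>) else 0)"
      by (rule sum.cong[OF refl]) (auto simp: idem_chi[OF chi])
    also have "\<dots> = (\<Sum>\<beta>\<in>C. a (res \<chi>) \<beta> * e \<beta> y)"
      using finC res_C[OF chi] by (simp add: sum.delta' mult.commute)
    finally show ?thesis unfolding Pm_def Ef_def using True by simp
  next
    case False
    then show ?thesis unfolding Pm_def using Ef_out Hc by auto
  qed
qed

lemma Qm_twJ:
  fixes a :: "('a \<Rightarrow> 'k) \<Rightarrow> ('a \<Rightarrow> 'k) \<Rightarrow> 'k"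
  assumes chi: "\<chi> \<in> chs G"
  shows "Qm G \<chi> (twist_J G H a) = Ef (\<lambda>\<alpha>. a \<alpha> (res \<chi>))"
proof
  fix x show "Qm G \<chi> (twist_J G H a) x = Ef (\<lambda>\<alpha>. a \<alpha> (res \<chi>)) x"
  proof (cases "x \<in> carrier G")
    case True
    have "(\<Sum>y\<in>carrier G. twist_J G H a (x, y) * \<chi> y)
       = (\<Sum>y\<in>carrier G. \<Sum>\<alpha>\<in>C. \<Sum>\<beta>\<in>C. e \<alpha> x * (a \<alpha> \<beta> * (e \<beta> y * \<chi> y)))"
      unfolding twist_J_def by (simp add: sum_distrib_right algebra_simps sum_distrib_left)
    also have "\<dots> = (\<Sum>\<alpha>\<in>C. \<Sum>\<beta>\<in>C. e \<alpha> x * (a \<alpha> \<beta> * (\<Sum>y\<in>carrier G. e \<beta> y * \<chi> y)))"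
    proof -
      have "(\<Sum>y\<in>carrier G. \<Sum>\<alpha>\<in>C. \<Sum>\<beta>\<in>C. e \<alpha> x * (a \<alpha> \<beta> * (e \<beta> y * \<chi> y)))
          = (\<Sum>\<alpha>\<in>C. \<Sum>y\<in>carrier G. \<Sum>\<beta>\<in>C. e \<alpha> x * (a \<alpha> \<beta> * (e \<beta> y * \<chi> y)))" by (rule sum.swap)
      also have "\<dots> = (\<Sum>\<alpha>\<in>C. \<Sum>\<beta>\<in>C. \<Sum>y\<in>carrier G. e \<alpha> x * (a \<alpha> \<beta> * (e \<beta> y * \<chi> y)))"
        by (rule sum.cong[OF refl], rule sum.swap)
      finally show ?thesis by (simp add: sum_distrib_left)
    qed
    also have "\<dots> = (\<Sum>\<alpha>\<in>C. \<Sum>\<beta>\<in>C. if \<beta> = res \<chi> then e \<alpha> x * a \<alpha> (res \<chi>) else 0)"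
      by (intro sum.cong refl) (auto simp: idem_chi[OF chi])
    also have "\<dots> = (\<Sum>\<alpha>\<in>C. a \<alpha> (res \<chi>) * e \<alpha> x)"
      using finC res_C[OF chi] by (simp add: sum.delta mult.commute)
    finally show ?thesis unfolding Qm_def Ef_def using True by simp
  next
    case False
    then show ?thesis unfolding Qm_def using Ef_out Hc by auto
  qed
qed

end


context setting begin

lemma grouplikes_chs: "dual_grouplikes G = chs G"
  unfolding dual_grouplikes_def chs_def dual_space_def by auto

lemma sum_dl:
  fixes f :: "'a \<Rightarrow> 'k"
  assumes "y \<in> carrier G"
  shows "(\<Sum>x\<in>carrier G. f x * (if x = y then 1 else 0)) = f y"
proof -
  have "(\<Sum>x\<in>carrier G. f x * (if x = y then 1 else 0)) = (\<Sum>x\<in>carrier G. if x = y then f x else 0)"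
    by (intro sum.cong) auto
  also have "\<dots> = f y" using assms fin by (simp add: sum.delta)
  finally show ?thesis .
qed

lemma dual_mult_P:
  assumes h: "h \<in> carrier G"
  shows "dual_mult G H \<omega> \<chi> \<psi> h = (\<Sum>y\<in>carrier G. Pm G \<chi> (DeltaJ G H \<omega> h) y * \<psi> y)"
proof -
  have "dual_mult G H \<omega> \<chi> \<psi> h = (\<Sum>x\<in>carrier G. \<Sum>y\<in>carrier G. DeltaJ G H \<omega> h (x, y) * \<chi> x * \<psi> y)"
    unfolding dual_mult_def using h by (simp add: sum.cartesian_product)
  also have "\<dots> = (\<Sum>y\<in>carrier G. \<Sum>x\<in>carrier G. DeltaJ G H \<omega> h (x, y) * \<chi> x * \<psi> y)"
    by (rule sum.swap)
  also have "\<dots> = (\<Sum>y\<in>carrier G. Pm G \<chi> (DeltaJ G H \<omega> h) y * \<psi> y)"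
    unfolding Pm_def by (intro sum.cong refl) (simp add: sum_distrib_right)
  finally show ?thesis .
qed

lemma dual_mult_Q:
  assumes h: "h \<in> carrier G"
  shows "dual_mult G H \<omega> \<psi> \<chi> h = (\<Sum>x\<in>carrier G. Qm G \<chi> (DeltaJ G H \<omega> h) x * \<psi> x)"
proof -
  have "dual_mult G H \<omega> \<psi> \<chi> h = (\<Sum>x\<in>carrier G. \<Sum>y\<in>carrier G. DeltaJ G H \<omega> h (x, y) * \<psi> x * \<chi> y)"
    unfolding dual_mult_def using h by (simp add: sum.cartesian_product)
  also have "\<dots> = (\<Sum>x\<in>carrier G. Qm G \<chi> (DeltaJ G H \<omega> h) x * \<psi> x)"
    unfolding Qm_def by (intro sum.cong refl) (simp add: sum_distrib_left sum_distrib_right mult_ac)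
  finally show ?thesis .
qed

lemma center_iff:
  assumes chi: "\<chi> \<in> chs G"
  shows "\<chi> \<in> dual_center G H \<omega> \<longleftrightarrow> (\<forall>h\<in>carrier G. Pm G \<chi> (DeltaJ G H \<omega> h) = Qm G \<chi> (DeltaJ G H \<omega> h))"
proof
  assume c: "\<chi> \<in> dual_center G H \<omega>"
  show "\<forall>h\<in>carrier G. Pm G \<chi> (DeltaJ G H \<omega> h) = Qm G \<chi> (DeltaJ G H \<omega> h)"
  proof (intro ballI ext)
    fix h y assume h: "h \<in> carrier G"
    show "Pm G \<chi> (DeltaJ G H \<omega> h) y = Qm G \<chi> (DeltaJ G H \<omega> h) y"
    proof (cases "y \<in> carrier G")
      case True
      have d: "dl G y \<in> dual_space G" unfolding dual_space_def dl_def using True by auto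
      have "\<forall>\<psi>\<in>dual_space G. dual_mult G H \<omega> \<chi> \<psi> = dual_mult G H \<omega> \<psi> \<chi>"
        using c unfolding dual_center_def by blast
      then have "dual_mult G H \<omega> \<chi> (dl G y) = dual_mult G H \<omega> (dl G y) \<chi>" using d by blast
      then have "dual_mult G H \<omega> \<chi> (dl G y) h = dual_mult G H \<omega> (dl G y) \<chi> h" by simp
      moreover have "dual_mult G H \<omega> \<chi> (dl G y) h = Pm G \<chi> (DeltaJ G H \<omega> h) y"
        unfolding dual_mult_P[OF h] dl_def by (rule sum_dl[OF True])
      moreover have "dual_mult G H \<omega> (dl G y) \<chi> h = Qm G \<chi> (DeltaJ G H \<omega> h) y"
        unfolding dual_mult_Q[OF h] dl_def by (rule sum_dl[OF True])
      ultimately show ?thesis by simp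
    qed (simp add: Pm_def Qm_def)
  qed
next
  assume e: "\<forall>h\<in>carrier G. Pm G \<chi> (DeltaJ G H \<omega> h) = Qm G \<chi> (DeltaJ G H \<omega> h)"
  have "\<chi> \<in> dual_space G" unfolding dual_space_def using chsD(3)[OF chi] by simp
  moreover have "dual_mult G H \<omega> \<chi> \<psi> = dual_mult G H \<omega> \<psi> \<chi>" for \<psi>
  proof
    fix h show "dual_mult G H \<omega> \<chi> \<psi> h = dual_mult G H \<omega> \<psi> \<chi> h"
    proof (cases "h \<in> carrier G")
      case True then show ?thesis using e dual_mult_P[OF True] dual_mult_Q[OF True] by simp
    qed (simp add: dual_mult_def)
  qed
  ultimately show "\<chi> \<in> dual_center G H \<omega>" unfolding dual_center_def by simp
qed

lemma Pm_Delta: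
  assumes chi: "\<chi> \<in> chs G" and h: "h \<in> carrier G"
  shows "Pm G \<chi> (DeltaJ G H \<omega> h) = conv G (conv G (Ef (\<lambda>\<beta>. inverse (\<omega> (res \<chi>) \<beta>))) (\<lambda>y. \<chi> h * dl G h y)) (Ef (\<lambda>\<beta>. \<omega> (res \<chi>) \<beta>))"
  unfolding DeltaJ_def Pm_tmult[OF chi] Jinv_eq Pm_twJ[OF chi] Pm_delta[OF h] ..

lemma Qm_Delta:
  assumes chi: "\<chi> \<in> chs G" and h: "h \<in> carrier G"
  shows "Qm G \<chi> (DeltaJ G H \<omega> h) = conv G (conv G (Ef (\<lambda>\<alpha>. inverse (\<omega> \<alpha> (res \<chi>)))) (\<lambda>y. \<chi> h * dl G h y)) (Ef (\<lambda>\<alpha>. \<omega> \<alpha> (res \<chi>)))"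
  unfolding DeltaJ_def Qm_tmult[OF chi] Jinv_eq Qm_twJ[OF chi] Qm_delta[OF h] ..

lemma char_one_mult: "\<gamma> \<in> C \<Longrightarrow> char_mult H (char_one H) \<gamma> = \<gamma>"
  unfolding char_mult_def char_one_def chars_def by auto

lemma char_mult_one: "\<gamma> \<in> C \<Longrightarrow> char_mult H \<gamma> (char_one H) = \<gamma>"
  unfolding char_mult_def char_one_def chars_def by auto

lemma omega_one_left: "\<gamma> \<in> C \<Longrightarrow> \<omega> (char_one H) \<gamma> = \<omega> (char_one H) (char_one H)"
proof -
  assume g: "\<gamma> \<in> C"
  have "\<omega> (char_one H) (char_one H) * \<omega> (char_one H) \<gamma> = \<omega> (char_one H) \<gamma> * \<omega> (char_one H) \<gamma>"
    using omega_cocycle[OF one_C one_C g] char_one_mult[OF one_C] char_one_mult[OF g] by simp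
  then show ?thesis using omega_nz[OF one_C g] by simp
qed

lemma omega_one_right: "\<gamma> \<in> C \<Longrightarrow> \<omega> \<gamma> (char_one H) = \<omega> (char_one H) (char_one H)"
proof -
  assume g: "\<gamma> \<in> C"
  have "\<omega> \<gamma> (char_one H) * \<omega> \<gamma> (char_one H) = \<omega> (char_one H) (char_one H) * \<omega> \<gamma> (char_one H)"
    using omega_cocycle[OF g one_C one_C] char_mult_one[OF one_C] char_mult_one[OF g] by simp
  then show ?thesis using omega_nz[OF g one_C] by simp
qed

lemma main_backward:
  assumes chi: "\<chi> \<in> chs G" and one: "\<forall>x\<in>H. \<chi> x = 1"
  shows "\<chi> \<in> dual_center G H \<omega>"
proof -
  have r: "res \<chi> = char_one H" unfolding res_def char_one_def using one by auto
  have lr: "\<omega> (char_one H) \<alpha> = \<omega> \<alpha> (char_one H)" if a: "\<alpha> \<in> C" for \<alpha>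
    using omega_one_left[OF a] omega_one_right[OF a] by simp
  have 1: "Ef (\<lambda>\<beta>. inverse (\<omega> (res \<chi>) \<beta>)) = Ef (\<lambda>\<alpha>. inverse (\<omega> \<alpha> (res \<chi>)))"
    unfolding r by (rule Ef_cong) (simp only: lr)
  have 2: "Ef (\<lambda>\<beta>. \<omega> (res \<chi>) \<beta>) = Ef (\<lambda>\<alpha>. \<omega> \<alpha> (res \<chi>))"
    unfolding r by (rule Ef_cong) (simp only: lr)
  show ?thesis unfolding center_iff[OF chi]
  proof
    fix h assume h: "h \<in> carrier G"
    show "Pm G \<chi> (DeltaJ G H \<omega> h) = Qm G \<chi> (DeltaJ G H \<omega> h)"
      by (simp only: Pm_Delta[OF chi h] Qm_Delta[OF chi h] 1 2)
  qed
qed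

end


lemma (in group) conv_scale_right: "conv G f (\<lambda>x. c * g x) = (\<lambda>x. c * conv G f g x)"
  unfolding conv_def by (auto simp: sum_distrib_left algebra_simps)

context setting begin

lemma omega_alt_mult:
  assumes c: "c \<in> C" and a: "\<alpha> \<in> C" and b: "\<beta> \<in> C"
  shows "\<omega> (char_mult H \<alpha> \<beta>) c * inverse (\<omega> c (char_mult H \<alpha> \<beta>))
       = (\<omega> \<alpha> c * inverse (\<omega> c \<alpha>)) * (\<omega> \<beta> c * inverse (\<omega> c \<beta>))"
proof -
  have com1: "char_mult H c \<alpha> = char_mult H \<alpha> c" using charmult[OF c a] charmult[OF a c] by (simp add: mult.commute)
  have com2: "char_mult H \<beta> c = char_mult H c \<beta>" using charmult[OF b c] charmult[OF c b] by (simp add: mult.commute)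
  have ab: "char_mult H \<alpha> \<beta> \<in> C" using charmult_C[OF a b] .
  have ac': "char_mult H \<alpha> c \<in> C" using charmult_C[OF a c] .
  have cb: "char_mult H c \<beta> \<in> C" using charmult_C[OF c b] .
  have e1: "\<omega> \<alpha> \<beta> * \<omega> (char_mult H \<alpha> \<beta>) c = \<omega> \<beta> c * \<omega> \<alpha> (char_mult H c \<beta>)"
    using omega_cocycle[OF a b c] com2 by simp
  have e2: "\<omega> c \<alpha> * \<omega> (char_mult H \<alpha> c) \<beta> = \<omega> \<alpha> \<beta> * \<omega> c (char_mult H \<alpha> \<beta>)"
    using omega_cocycle[OF c a b] com1 by simp
  have e3: "\<omega> \<alpha> c * \<omega> (char_mult H \<alpha> c) \<beta> = \<omega> c \<beta> * \<omega> \<alpha> (char_mult H c \<beta>)"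
    using omega_cocycle[OF a c b] by simp
  have nz: "\<omega> \<alpha> \<beta> \<noteq> 0" "\<omega> c \<alpha> \<noteq> 0" "\<omega> c \<beta> \<noteq> 0" "\<omega> (char_mult H \<alpha> c) \<beta> \<noteq> 0"
    "\<omega> c (char_mult H \<alpha> \<beta>) \<noteq> 0" "\<omega> \<alpha> c \<noteq> 0" "\<omega> \<beta> c \<noteq> 0"
    using omega_nz a b c ab ac' by auto
  define A where "A = \<omega> (char_mult H \<alpha> \<beta>) c"
  define B where "B = \<omega> c (char_mult H \<alpha> \<beta>)"
  define X where "X = \<omega> \<alpha> (char_mult H c \<beta>)"
  define Y where "Y = \<omega> (char_mult H \<alpha> c) \<beta>"
  have A: "A = \<omega> \<beta> c * X / \<omega> \<alpha> \<beta>" using e1 nz unfolding A_def X_def by (simp add: field_simps)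
  have B: "B = \<omega> c \<alpha> * Y / \<omega> \<alpha> \<beta>" using e2 nz unfolding B_def Y_def by (simp add: field_simps)
  have X: "X = \<omega> \<alpha> c * Y / \<omega> c \<beta>" using e3 nz unfolding X_def Y_def by (simp add: field_simps)
  have "A * inverse B = (\<omega> \<alpha> c * inverse (\<omega> c \<alpha>)) * (\<omega> \<beta> c * inverse (\<omega> c \<beta>))"
    unfolding A B X using nz unfolding Y_def by (simp add: field_simps)
  then show ?thesis unfolding A_def B_def .
qed

lemma C_sum_mult:
  assumes mult: "\<forall>\<alpha>\<in>C. \<forall>\<beta>\<in>C. \<mu> (char_mult H \<alpha> \<beta>) = \<mu> \<alpha> * \<mu> \<beta>"
    and nz: "(\<Sum>\<alpha>\<in>C. \<mu> \<alpha>) \<noteq> (0::'k)"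
  shows "\<forall>\<alpha>\<in>C. \<mu> \<alpha> = 1"
proof (rule ccontr)
  assume "\<not> (\<forall>\<alpha>\<in>C. \<mu> \<alpha> = 1)"
  then obtain \<beta> where b: "\<beta> \<in> C" "\<mu> \<beta> \<noteq> 1" by blast
  let ?f = "char_mult H \<beta>"
  have inj: "inj_on ?f C"
  proof (rule inj_onI)
    fix \<alpha> \<alpha>' assume a: "\<alpha> \<in> C" "\<alpha>' \<in> C" "?f \<alpha> = ?f \<alpha>'"
    show "\<alpha> = \<alpha>'"
    proof
      fix x show "\<alpha> x = \<alpha>' x"
      proof (cases "x \<in> H")
        case True
        have "\<beta> x * \<alpha> x = \<beta> x * \<alpha>' x" using fun_cong[OF a(3), of x] True unfolding char_mult_def by simp
        then show ?thesis using Cv(4)[OF b(1) True] by simp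
      next
        case False then show ?thesis using Cv(3)[OF a(1)] Cv(3)[OF a(2)] by simp
      qed
    qed
  qed
  have "?f ` C \<subseteq> C" using charmult_C[OF b(1)] by auto
  then have img: "?f ` C = C" using endo_inj_surj[OF finC _ inj] by simp
  have "(\<Sum>\<alpha>\<in>C. \<mu> \<alpha>) = (\<Sum>\<alpha>\<in>?f ` C. \<mu> \<alpha>)" using img by simp
  also have "\<dots> = (\<Sum>\<alpha>\<in>C. \<mu> (?f \<alpha>))" using sum.reindex[OF inj] by simp
  also have "\<dots> = (\<Sum>\<alpha>\<in>C. \<mu> \<beta> * \<mu> \<alpha>)" using mult b(1) by (intro sum.cong) auto
  also have "\<dots> = \<mu> \<beta> * (\<Sum>\<alpha>\<in>C. \<mu> \<alpha>)" by (simp add: sum_distrib_left)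
  finally have "(1 - \<mu> \<beta>) * (\<Sum>\<alpha>\<in>C. \<mu> \<alpha>) = 0" by (simp add: algebra_simps)
  then show False using b(2) nz by simp
qed

lemma res_one: "res (one_ch G) = char_one H"
  unfolding res_def one_ch_def char_one_def using inH by auto

lemma sum_idem_G: "\<alpha> \<in> C \<Longrightarrow> (\<Sum>x\<in>carrier G. idem G H \<alpha> x) = (if \<alpha> = char_one H then 1 else 0)"
proof -
  assume a: "\<alpha> \<in> C"
  have "(\<Sum>x\<in>carrier G. idem G H \<alpha> x) = (\<Sum>x\<in>carrier G. idem G H \<alpha> x * one_ch G x)"
    unfolding one_ch_def by (intro sum.cong) auto
  also have "\<dots> = (if \<alpha> = char_one H then 1 else 0)" using idem_chi[OF one_ch_chs a] res_one by simp
  finally show ?thesis .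
qed

end


context setting begin

lemma main_forward:
  assumes chi: "\<chi> \<in> chs G" and cen: "\<chi> \<in> dual_center G H \<omega>"
    and Z: "grp_center G = {\<one>}" and nd: "nondegenerate G H \<omega>"
  shows "\<forall>x\<in>H. \<chi> x = 1"
proof -
  define c where "c = res \<chi>"
  have cC: "c \<in> C" unfolding c_def using res_C[OF chi] .
  define U where "U = Ef (\<lambda>\<beta>. \<omega> c \<beta>)"
  define U' where "U' = Ef (\<lambda>\<beta>. inverse (\<omega> c \<beta>))"
  define V where "V = Ef (\<lambda>\<alpha>. \<omega> \<alpha> c)"
  define V' where "V' = Ef (\<lambda>\<alpha>. inverse (\<omega> \<alpha> c))"
  define lam where "lam = (\<lambda>\<alpha>. \<omega> \<alpha> c * inverse (\<omega> c \<alpha>))"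
  define W where "W = Ef lam"
  have one: "Ef (\<lambda>_. 1) = dl G \<one>" using Ef_const[of 1] by simp
  have UU': "conv G U U' = dl G \<one>"
    unfolding U_def U'_def Ef_mult one[symmetric] using omega_nz[OF cC] by (intro Ef_cong) simp
  have VV': "conv G V V' = dl G \<one>"
    unfolding V_def V'_def Ef_mult one[symmetric] using omega_nz[OF _ cC] by (intro Ef_cong) simp
  have VU': "conv G V U' = W" unfolding V_def U'_def W_def lam_def Ef_mult ..
  have cW: "W (x \<otimes> inv h) = W (inv h \<otimes> x)" if h: "h \<in> carrier G" and x: "x \<in> carrier G" for h x
  proof -
    define D where "D = (\<lambda>y. \<chi> h * dl G h y)"
    have Dsupp: "supp G D" unfolding supp_def D_def dl_def using h by auto
    have key: "conv G (conv G U' D) U = conv G (conv G V' D) V"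
      using center_iff[OF chi] cen h Pm_Delta[OF chi h] Qm_Delta[OF chi h]
      unfolding D_def U_def U'_def V_def V'_def c_def by simp
    have l: "conv G W D = conv G V (conv G (conv G (conv G U' D) U) U')"
    proof -
      have "conv G V (conv G (conv G (conv G U' D) U) U') = conv G V (conv G U' (conv G D (conv G U U')))"
        by (simp only: conv_assoc)
      also have "\<dots> = conv G V (conv G U' D)" unfolding UU' conv_one_right[OF Dsupp] ..
      also have "\<dots> = conv G W D" unfolding VU'[symmetric] conv_assoc ..
      finally show ?thesis by simp
    qed
    have r: "conv G D W = conv G V (conv G (conv G (conv G V' D) V) U')"
    proof -
      have "conv G V (conv G (conv G (conv G V' D) V) U') = conv G (conv G V V') (conv G D (conv G V U'))"
        by (simp only: conv_assoc)
      also have "\<dots> = conv G D W" unfolding VV' VU' conv_one_left[OF conv_supp] ..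
      finally show ?thesis by simp
    qed
    have eq: "conv G W D = conv G D W" using l r key by simp
    have "conv G W D x = \<chi> h * W (x \<otimes> inv h)"
      unfolding D_def conv_scale_right conv_dl_right[OF h] using x by simp
    moreover have "conv G D W x = \<chi> h * W (inv h \<otimes> x)"
      unfolding D_def conv_scale_left conv_dl_left[OF h] using x by simp
    ultimately show ?thesis using eq chs_nz[OF chi h] by simp
  qed
  have lam_one: "lam (char_one H) = 1"
    unfolding lam_def using omega_one_left[OF cC] omega_one_right[OF cC] omega_nz[OF one_C one_C] by simp
  have "(\<Sum>x\<in>carrier G. W x) = (\<Sum>\<alpha>\<in>C. lam \<alpha> * (\<Sum>x\<in>carrier G. idem G H \<alpha> x))"
    unfolding W_def Ef_def by (subst sum.swap) (simp add: sum_distrib_left)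
  also have "\<dots> = (\<Sum>\<alpha>\<in>C. if \<alpha> = char_one H then lam \<alpha> else 0)"
    by (intro sum.cong refl) (simp add: sum_idem_G)
  also have "\<dots> = 1" using finC one_C lam_one by (simp add: sum.delta')
  finally have sumW: "(\<Sum>x\<in>carrier G. W x) = 1" .
  then obtain x0 where x0: "x0 \<in> carrier G" "W x0 \<noteq> 0"
    by (metis (no_types, lifting) one_neq_zero sum.neutral)
  have x0H: "x0 \<in> H" using x0(2) Ef_out unfolding W_def by blast
  have invx0: "inv x0 \<in> H" using x0H subgroupE(3)[OF subH] by simp
  define \<mu> where "\<mu> = (\<lambda>\<alpha>. lam \<alpha> * \<alpha> (inv x0))"
  have "W x0 = (\<Sum>\<alpha>\<in>C. \<mu> \<alpha>) / nn"
    unfolding W_def Ef_def \<mu>_def using x0H by (simp add: idem_in sum_divide_distrib)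
  then have munz: "(\<Sum>\<alpha>\<in>C. \<mu> \<alpha>) \<noteq> 0" using x0(2) by auto
  have mumult: "\<forall>\<alpha>\<in>C. \<forall>\<beta>\<in>C. \<mu> (char_mult H \<alpha> \<beta>) = \<mu> \<alpha> * \<mu> \<beta>"
  proof (intro ballI)
    fix \<alpha> \<beta> assume a: "\<alpha> \<in> C" and b: "\<beta> \<in> C"
    have "lam (char_mult H \<alpha> \<beta>) = lam \<alpha> * lam \<beta>" unfolding lam_def using omega_alt_mult[OF cC a b] .
    moreover have "char_mult H \<alpha> \<beta> (inv x0) = \<alpha> (inv x0) * \<beta> (inv x0)" unfolding char_mult_def using invx0 by simp
    ultimately show "\<mu> (char_mult H \<alpha> \<beta>) = \<mu> \<alpha> * \<mu> \<beta>" unfolding \<mu>_def by simp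
  qed
  have mu1: "\<forall>\<alpha>\<in>C. \<mu> \<alpha> = 1" using C_sum_mult[OF mumult munz] .
  have lamx0: "lam \<alpha> = \<alpha> x0" if a: "\<alpha> \<in> C" for \<alpha>
  proof -
    have "lam \<alpha> * \<alpha> (inv x0) = 1" using mu1 a unfolding \<mu>_def by blast
    then have "lam \<alpha> * inverse (\<alpha> x0) = 1" using Cv(5)[OF a x0H] by simp
    then show ?thesis using Cv(4)[OF a x0H] by (simp add: field_simps)
  qed
  have Wval: "W y = (if y = x0 then 1 else 0)" if y: "y \<in> H" for y
  proof -
    have yi: "inv y \<in> H" using y subgroupE(3)[OF subH] by simp
    have m: "x0 \<otimes> inv y \<in> H" using x0H yi subgroupE(4)[OF subH] by simp
    have "W y = (\<Sum>\<alpha>\<in>C. lam \<alpha> * (\<alpha> (inv y) / nn))" unfolding W_def Ef_def using y by (simp add: idem_in)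
    also have "\<dots> = (\<Sum>\<alpha>\<in>C. \<alpha> (x0 \<otimes> inv y) / nn)"
    proof (rule sum.cong[OF refl])
      fix \<alpha> assume a: "\<alpha> \<in> C"
      show "lam \<alpha> * (\<alpha> (inv y) / nn) = \<alpha> (x0 \<otimes> inv y) / nn"
        using lamx0[OF a] Cv(1)[OF a x0H yi] by simp
    qed
    also have "\<dots> = (\<Sum>\<alpha>\<in>C. \<alpha> (x0 \<otimes> inv y)) / nn" by (simp add: sum_divide_distrib)
    also have "\<dots> = (if x0 \<otimes> inv y = \<one> then 1 else 0)" using sumC[OF m] n_nz by simp
    also have "(x0 \<otimes> inv y = \<one>) = (y = x0)"
      using inv_solve_right'[of \<one> x0 y] inH[OF y] x0(1) by auto
    finally show ?thesis .
  qed
  have Wx0: "W x0 = 1" using Wval[OF x0H] by simp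
  have cent: "x0 \<otimes> h = h \<otimes> x0" if h: "h \<in> carrier G" for h
  proof -
    have xh: "x0 \<otimes> h \<in> carrier G" using x0(1) h by simp
    have "W (x0 \<otimes> h \<otimes> inv h) = W (inv h \<otimes> (x0 \<otimes> h))" using cW[OF h xh] .
    moreover have "x0 \<otimes> h \<otimes> inv h = x0" using x0(1) h by (simp add: m_assoc)
    ultimately have w1: "W (inv h \<otimes> (x0 \<otimes> h)) = 1" using Wx0 by simp
    have "inv h \<otimes> (x0 \<otimes> h) \<in> H"
    proof (rule ccontr)
      assume "inv h \<otimes> (x0 \<otimes> h) \<notin> H"
      then show False using w1 Ef_out unfolding W_def by simp
    qed
    then have "inv h \<otimes> (x0 \<otimes> h) = x0" using Wval w1 by (metis zero_neq_one)
    then show ?thesis using x0(1) h by (metis inv_solve_left m_closed)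
  qed
  have "x0 \<in> grp_center G" unfolding grp_center_def using cent x0(1) by simp
  then have x01: "x0 = \<one>" using Z by simp
  have reg: "omega_regular G H \<omega> c"
    unfolding omega_regular_def
  proof
    fix \<psi> assume p: "\<psi> \<in> C"
    have "lam \<psi> = 1" using lamx0[OF p] x01 Cv(2)[OF p] by simp
    then show "\<omega> c \<psi> = \<omega> \<psi> c" unfolding lam_def using omega_nz[OF cC p] by (simp add: field_simps)
  qed
  then have c1: "c = char_one H" using nd cC unfolding nondegenerate_def by blast
  show ?thesis
  proof
    fix x assume x: "x \<in> H"
    have "res \<chi> x = char_one H x" using c1 unfolding c_def by simp
    then show "\<chi> x = 1" using x unfolding res_def char_one_def by simp
  qed
qed

end


lemma (in group) chs_mult: "\<chi> \<in> chs G \<Longrightarrow> \<psi> \<in> chs G \<Longrightarrow> (\<lambda>x. \<chi> x * \<psi> x) \<in> chs G"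
  unfolding chs_def by (auto simp: algebra_simps)

theorem corollary3p2:
  fixes G :: "('a, 'b) monoid_scheme" and H :: "'a set"
    and \<omega> :: "('a \<Rightarrow> 'k::field_char_0) \<Rightarrow> ('a \<Rightarrow> 'k) \<Rightarrow> 'k"
  assumes "alg_closed TYPE('k)"
    and "group G" and "finite (carrier G)"
    and "grp_center G = {\<one>\<^bsub>G\<^esub>}"
    and "subgroup H G"
    and "\<forall>x\<in>H. \<forall>y\<in>H. x \<otimes>\<^bsub>G\<^esub> y = y \<otimes>\<^bsub>G\<^esub> x"
    and "is_2cocycle G H \<omega>"
    and "nondegenerate G H \<omega>"
  shows "card H dvd
           (card (carrier G) div card (dual_grouplikes G \<inter> dual_center G H \<omega>))"
proof -
  interpret S: setting G H \<omega>
    using assms unfolding setting_def setting_axioms_def fgroup_def fgroup_axioms_def by simp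
  define T where "T = {\<chi> \<in> chs G. \<forall>x\<in>H. \<chi> x = (1::'k)}"
  have ST: "dual_grouplikes G \<inter> dual_center G H \<omega> = T"
  proof
    show "dual_grouplikes G \<inter> dual_center G H \<omega> \<subseteq> T"
      unfolding T_def S.grouplikes_chs using S.main_forward assms(4,8) by blast
    show "T \<subseteq> dual_grouplikes G \<inter> dual_center G H \<omega>"
      unfolding T_def S.grouplikes_chs using S.main_backward by blast
  qed
  have Tsub: "T \<subseteq> chs G" unfolding T_def by blast
  have finT: "finite T" using finite_subset[OF Tsub S.finite_chs[OF assms(3)]] .
  have oneT: "one_ch G \<in> T" unfolding T_def using S.one_ch_chs S.inH unfolding one_ch_def by auto
  have chT: "ch_grp G T" unfolding ch_grp_def
  proof (intro conjI ballI)
    fix \<chi> \<psi> assume "\<chi> \<in> T" "\<psi> \<in> T"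
    then show "(\<lambda>x. \<chi> x * \<psi> x) \<in> T" unfolding T_def using S.chs_mult by auto
  qed (use Tsub finT oneT in auto)
  define K where "K = {x \<in> carrier G. \<forall>\<chi>\<in>T. \<chi> x = 1}"
  have cnt: "card T * card K = card (carrier G)"
    using S.T_count[OF assms(3) chT] unfolding K_def order_def by simp
  have Tpos: "card T > 0" using finT oneT by (auto simp: card_gt_0_iff)
  have divK: "card (carrier G) div card T = card K" using cnt Tpos by (metis nonzero_mult_div_cancel_left not_less0 neq0_conv)
  have HK: "H \<subseteq> K" unfolding K_def T_def using S.inH by auto
  have subK: "subgroup K G"
  proof (rule S.subgroupI)
    show "K \<subseteq> carrier G" unfolding K_def by auto
    show "K \<noteq> {}" using HK subgroup.one_closed[OF assms(5)] by auto
  next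
    fix a assume a: "a \<in> K"
    then have ac: "a \<in> carrier G" unfolding K_def by auto
    have "\<chi> (inv\<^bsub>G\<^esub> a) = 1" if "\<chi> \<in> T" for \<chi>
      using S.chs_inv'[of \<chi> a] that a ac Tsub unfolding K_def by auto
    then show "inv\<^bsub>G\<^esub> a \<in> K" unfolding K_def using ac by auto
  next
    fix a b assume a: "a \<in> K" and b: "b \<in> K"
    then have ac: "a \<in> carrier G" "b \<in> carrier G" unfolding K_def by auto
    have "\<chi> (a \<otimes>\<^bsub>G\<^esub> b) = 1" if t: "\<chi> \<in> T" for \<chi>
    proof -
      have tc: "\<chi> \<in> chs G" using t Tsub by blast
      have "\<chi> (a \<otimes>\<^bsub>G\<^esub> b) = \<chi> a * \<chi> b" using chsD(1)[OF tc ac(1) ac(2)] .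
      then show ?thesis using t a b unfolding K_def by auto
    qed
    then show "a \<otimes>\<^bsub>G\<^esub> b \<in> K" unfolding K_def using ac by auto
  qed
  interpret KG: group "G\<lparr>carrier := K\<rparr>" using S.subgroup_imp_group[OF subK] .
  have "subgroup H (G\<lparr>carrier := K\<rparr>)" using S.subgroup_incl[OF assms(5) subK HK] .
  then have "card (rcosets\<^bsub>G\<lparr>carrier := K\<rparr>\<^esub> H) * card H = order (G\<lparr>carrier := K\<rparr>)" by (rule KG.lagrange)
  then have "card (rcosets\<^bsub>G\<lparr>carrier := K\<rparr>\<^esub> H) * card H = card K" unfolding order_def by simp
  then have "card H dvd card K" by (metis dvd_triv_right)
  then show ?thesis using ST divK by simp
qed


end
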